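(* Let $A,D\in\mathbb{B}(\mathcal{H})$ and $T=\begin{bmatrix}A&0\\0&D\end{bmatrix}\in\mathbb{B}(\mathcal{H}\oplus\mathcal{H})$. Let $f,g$ be non-negative continuous functions on $[0,\infty)$ with $f(t)g(t)=t$ for all $t\ge0$. Then for every non-negative, nondecreasing, convex function $h$ on $[0,\infty)$, \[ h(w(T))\le \frac12\max\left(\left\|h\big(f^2(|A|)\big)+h\big(g^2(|A|)\big)\right\|,\ \left\|h\big(f^2(|D|)\big)+h\big(g^2(|D|)\big)\right\|\right). \]
   Context: $\mathcal{H}$ is a complex Hilbert space; $w(X)=\sup\{|\langle Xx,x\rangle|:\|x\|=1\}$ is the numerical radius; $|X|=(X^*X)^{1/2}$; functions of positive operators are defined by continuous functional calculus, $f^2(|A|)=(f(|A|))^2$; $\|\cdot\|$ is the operator norm. *)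

theory Defs
  imports "HOL-Analysis.Analysis" "HOL-Computational_Algebra.Polynomial"
begin

text \<open>A complex Hilbert space: a Banach space (over the reals, as a real normed
  vector space) carrying a complex scalar multiplication compatible with the real one,
  and a complex inner product (linear in the first argument) inducing the norm.\<close>

class complex_hilbert = banach +
  fixes hscale :: "complex \<Rightarrow> 'a \<Rightarrow> 'a"
    and hinner :: "'a \<Rightarrow> 'a \<Rightarrow> complex"
  assumes hscale_add_right: "hscale c (x + y) = hscale c x + hscale c y"
    and hscale_add_left: "hscale (b + c) x = hscale b x + hscale c x"
    and hscale_mult: "hscale b (hscale c x) = hscale (b * c) x"
    and hscale_one: "hscale 1 x = x"
    and hscale_of_real: "hscale (complex_of_real r) x = scaleR r x"
    and hinner_cnj: "hinner x y = cnj (hinner y x)"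
    and hinner_add_left: "hinner (x + y) z = hinner x z + hinner y z"
    and hinner_scale_left: "hinner (hscale c x) y = c * hinner x y"
    and hinner_self_nonneg: "Im (hinner x x) = 0 \<and> Re (hinner x x) \<ge> 0"
    and hinner_self_eq_0: "hinner x x = 0 \<longleftrightarrow> x = 0"
    and norm_hinner: "norm x = sqrt (Re (hinner x x))"

text \<open>The Hilbert direct sum \<open>H \<oplus> H'\<close> (product type with the product norm of HOL-Analysis).\<close>

instantiation prod :: (complex_hilbert, complex_hilbert) complex_hilbert
begin

definition hscale_prod_def: "hscale c p = (hscale c (fst p), hscale c (snd p))"
definition hinner_prod_def: "hinner p q = hinner (fst p) (fst q) + hinner (snd p) (snd q)"

instance
proof
  fix x y z :: "'a \<times> 'b" and b c :: complex and r :: real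
  show "hscale c (x + y) = hscale c x + hscale c y"
    by (simp add: hscale_prod_def hscale_add_right)
  show "hscale (b + c) x = hscale b x + hscale c x"
    by (simp add: hscale_prod_def hscale_add_left)
  show "hscale b (hscale c x) = hscale (b * c) x"
    by (simp add: hscale_prod_def hscale_mult)
  show "hscale 1 x = x"
    by (simp add: hscale_prod_def hscale_one)
  show "hscale (complex_of_real r) x = scaleR r x"
    by (simp add: hscale_prod_def hscale_of_real scaleR_prod_def)
  show "hinner x y = cnj (hinner y x)"
    by (simp add: hinner_prod_def hinner_cnj[of "fst x"] hinner_cnj[of "snd x"])
  show "hinner (x + y) z = hinner x z + hinner y z"
    by (simp add: hinner_prod_def hinner_add_left)
  show "hinner (hscale c x) y = c * hinner x y"
    by (simp add: hinner_prod_def hscale_prod_def hinner_scale_left algebra_simps)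
  show "Im (hinner x x) = 0 \<and> Re (hinner x x) \<ge> 0"
    using hinner_self_nonneg[of "fst x"] hinner_self_nonneg[of "snd x"]
    by (simp add: hinner_prod_def)
  show "hinner x x = 0 \<longleftrightarrow> x = 0"
  proof
    assume h: "hinner x x = 0"
    have 1: "Re (hinner (fst x) (fst x)) = 0" "Re (hinner (snd x) (snd x)) = 0"
      using h hinner_self_nonneg[of "fst x"] hinner_self_nonneg[of "snd x"]
      by (auto simp: hinner_prod_def complex_eq_iff)
    then have "hinner (fst x) (fst x) = 0" "hinner (snd x) (snd x) = 0"
      using hinner_self_nonneg[of "fst x"] hinner_self_nonneg[of "snd x"]
      by (auto simp: complex_eq_iff)
    then show "x = 0" by (simp add: hinner_self_eq_0 prod_eq_iff)
  next
    assume "x = 0" then show "hinner x x = 0"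
      using hinner_self_eq_0[of "0::'a"] hinner_self_eq_0[of "0::'b"] by (simp add: hinner_prod_def)
  qed
  show "norm x = sqrt (Re (hinner x x))"
    using hinner_self_nonneg[of "fst x"] hinner_self_nonneg[of "snd x"]
    by (simp add: norm_prod_def hinner_prod_def norm_hinner)
qed

end

definition cblinear :: "('a::complex_hilbert \<Rightarrow> 'a) \<Rightarrow> bool" where
  "cblinear A \<longleftrightarrow> bounded_linear A \<and> (\<forall>c x. A (hscale c x) = hscale c (A x))"

definition adjoint :: "('a::complex_hilbert \<Rightarrow> 'a) \<Rightarrow> ('a \<Rightarrow> 'a)" where
  "adjoint A = (THE B. \<forall>x y. hinner (A x) y = hinner x (B y))"

definition positive_op :: "('a::complex_hilbert \<Rightarrow> 'a) \<Rightarrow> bool" where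
  "positive_op P \<longleftrightarrow> cblinear P \<and> (\<forall>x. Im (hinner (P x) x) = 0 \<and> Re (hinner (P x) x) \<ge> 0)"

definition abs_op :: "('a::complex_hilbert \<Rightarrow> 'a) \<Rightarrow> ('a \<Rightarrow> 'a)" where
  "abs_op A = (THE P. positive_op P \<and> P \<circ> P = adjoint A \<circ> A)"

definition poly_op :: "real poly \<Rightarrow> ('a::complex_hilbert \<Rightarrow> 'a) \<Rightarrow> ('a \<Rightarrow> 'a)" where
  "poly_op p P = (\<lambda>x. \<Sum>i\<le>degree p. scaleR (coeff p i) ((P ^^ i) x))"

text \<open>Continuous functional calculus of a positive operator \<open>P\<close> (spectrum contained in
  \<open>[0, \<parallel>P\<parallel>]\<close>): \<open>f(P)\<close> is the operator-norm limit of \<open>p_n(P)\<close> for any sequence of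
  polynomials \<open>p_n\<close> converging uniformly to \<open>f\<close> on \<open>[0, \<parallel>P\<parallel>]\<close>.\<close>

definition fcalc :: "(real \<Rightarrow> real) \<Rightarrow> ('a::complex_hilbert \<Rightarrow> 'a) \<Rightarrow> ('a \<Rightarrow> 'a)" where
  "fcalc f P = (THE X. cblinear X \<and>
     (\<forall>p :: nat \<Rightarrow> real poly.
        uniform_limit {0..onorm P} (\<lambda>n t. poly (p n) t) f sequentially \<longrightarrow>
        ((\<lambda>n. onorm (\<lambda>x. poly_op (p n) P x - X x)) \<longlonglongrightarrow> 0)))"

definition numrad :: "('a::complex_hilbert \<Rightarrow> 'a) \<Rightarrow> real" where
  "numrad X = (SUP x\<in>{x. norm x = 1}. cmod (hinner (X x) x))"

end

theory Submission
  imports Defs "HOL-Computational_Algebra.Fundamental_Theorem_Algebra"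
begin


lemma hinner_add_right: "hinner x (y + z) = hinner x y + hinner x z"
  by (metis hinner_cnj hinner_add_left complex_cnj_add)

lemma hinner_scale_right: "hinner x (hscale c y) = cnj c * hinner x y"
  by (metis hinner_cnj hinner_scale_left complex_cnj_mult)

lemma hinner_zero_left[simp]: "hinner 0 y = 0"
  using hinner_add_left[of 0 0 y] by simp

lemma hinner_zero_right[simp]: "hinner x 0 = 0"
  using hinner_add_right[of x 0 0] by simp

lemma hinner_minus_left: "hinner (- x) y = - hinner x y"
  using hinner_add_left[of x "-x" y] by (metis add.commute eq_neg_iff_add_eq_0 add.right_inverse hinner_zero_left)

lemma hinner_minus_right: "hinner x (- y) = - hinner x y"
  using hinner_add_right[of x y "-y"] by (metis add.commute eq_neg_iff_add_eq_0 add.right_inverse hinner_zero_right)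

lemma hinner_diff_left: "hinner (x - y) z = hinner x z - hinner y z"
  using hinner_add_left[of x "-y" z] by (simp add: hinner_minus_left)

lemma hinner_diff_right: "hinner x (y - z) = hinner x y - hinner x z"
  using hinner_add_right[of x y "-z"] by (simp add: hinner_minus_right)

lemma hinner_scaleR_left: "hinner (scaleR r x) y = of_real r * hinner x y"
  by (metis hinner_scale_left hscale_of_real)

lemma hinner_scaleR_right: "hinner x (scaleR r y) = of_real r * hinner x y"
  by (metis hinner_scale_right hscale_of_real complex_cnj_complex_of_real)

lemma hinner_self: "hinner x x = complex_of_real ((norm x)^2)"
proof -
  have "Im (hinner x x) = 0" "Re (hinner x x) \<ge> 0" using hinner_self_nonneg by auto
  then show ?thesis by (simp add: norm_hinner complex_eq_iff)
qed

lemma hinner_sum_left: "hinner (\<Sum>i\<in>I. f i) y = (\<Sum>i\<in>I. hinner (f i) y)"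
  by (induction I rule: infinite_finite_induct) (auto simp: hinner_add_left)

lemma hinner_sum_right: "hinner y (\<Sum>i\<in>I. f i) = (\<Sum>i\<in>I. hinner y (f i))"
  by (induction I rule: infinite_finite_induct) (auto simp: hinner_add_right)

lemma hinner_ext: "(\<And>z. hinner z x = hinner z y) \<Longrightarrow> x = y"
  by (metis hinner_diff_right hinner_self_eq_0 right_minus_eq)

lemma hinner_ext_left: "(\<And>z. hinner x z = hinner y z) \<Longrightarrow> x = y"
  by (metis hinner_diff_left hinner_self_eq_0 right_minus_eq)

lemma hscale_zero_right[simp]: "hscale c 0 = 0"
  using hscale_add_right[of c 0 0] by simp

lemma mult_cnj_cmod: "c * cnj c = complex_of_real ((cmod c)^2)"
  by (rule complex_norm_square[symmetric])

lemma norm_hscale: "norm (hscale c x) = cmod c * norm x"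
proof -
  have "hinner (hscale c x) (hscale c x) = c * cnj c * hinner x x"
    by (simp add: hinner_scale_left hinner_scale_right)
  then have "complex_of_real ((norm (hscale c x))^2) = complex_of_real ((cmod c)^2 * (norm x)^2)"
    by (simp only: hinner_self mult_cnj_cmod of_real_mult)
  then have "(norm (hscale c x))^2 = (cmod c)^2 * (norm x)^2"
    using of_real_eq_iff by blast
  then show ?thesis
    by (metis norm_ge_zero norm_mult power2_eq_imp_eq power_mult_distrib zero_le_mult_iff)
qed

lemma hscale_minus_right: "hscale c (- x) = - hscale c x"
  by (metis add.right_inverse add_eq_0_iff hscale_add_right hscale_zero_right)

lemma hscale_diff_right: "hscale c (x - y) = hscale c x - hscale c y"
  by (metis diff_conv_add_uminus hscale_add_right hscale_minus_right)

lemma norm_sq_hinner: "(norm x)^2 = Re (hinner x x)"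
  by (simp add: hinner_self)

lemma cauchy_schwarz_real: "Re (hinner x y) \<le> norm x * norm y"
proof (cases "x = 0 \<or> y = 0")
  case True then show ?thesis by auto
next
  case False
  then have nx: "norm x > 0" and ny: "norm y > 0" by auto
  define a where "a = scaleR (1 / norm x) x"
  define b where "b = scaleR (1 / norm y) y"
  have na: "norm a = 1" using nx by (simp add: a_def)
  have nb: "norm b = 1" using ny by (simp add: b_def)
  have "0 \<le> Re (hinner (a - b) (a - b))" using hinner_self_nonneg by auto
  also have "Re (hinner (a - b) (a - b)) = 2 - 2 * Re (hinner a b)"
  proof -
    have "hinner b a = cnj (hinner a b)" by (rule hinner_cnj)
    then show ?thesis
      unfolding hinner_diff_left hinner_diff_right by (simp add: hinner_self na nb)
  qed
  finally have "Re (hinner a b) \<le> 1" by simp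
  moreover have "hinner a b = of_real (1 / (norm x * norm y)) * hinner x y"
    by (simp add: a_def b_def hinner_scaleR_left hinner_scaleR_right)
  ultimately have "Re (hinner x y) / (norm x * norm y) \<le> 1" by simp
  then show ?thesis using nx ny by (simp add: divide_le_eq)
qed

lemma cauchy_schwarz: "cmod (hinner x y) \<le> norm x * norm y"
proof (cases "hinner x y = 0")
  case True then show ?thesis by simp
next
  case False
  define u where "u = cnj (hinner x y) / cmod (hinner x y)"
  have cu: "cmod u = 1" using False by (simp add: u_def norm_divide)
  have "hinner (hscale u x) y = of_real (cmod (hinner x y))"
    using False by (simp add: u_def hinner_scale_left field_simps mult.commute[of "cnj _"] mult_cnj_cmod power2_eq_square)
  then have "cmod (hinner x y) = Re (hinner (hscale u x) y)" by simp
  also have "\<dots> \<le> norm (hscale u x) * norm y" by (rule cauchy_schwarz_real)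
  also have "\<dots> = norm x * norm y" by (simp add: norm_hscale cu)
  finally show ?thesis .
qed



section \<open>Positivity certificates for real polynomials on an interval\<close>

inductive_set pcone :: "real \<Rightarrow> real poly set" for M :: real where
  sq0: "s * s \<in> pcone M"
| sq1: "s * s * [:0, 1:] \<in> pcone M"
| sq2: "s * s * [:M, -1:] \<in> pcone M"
| add: "p \<in> pcone M \<Longrightarrow> q \<in> pcone M \<Longrightarrow> p + q \<in> pcone M"

lemma poly_eq_by_eval: "(\<And>x. poly p x = poly q x) \<Longrightarrow> p = (q :: real poly)"
  by (metis poly_eq_poly_eq_iff ext)

lemma pcone_mult_sq: "p \<in> pcone M \<Longrightarrow> r * r * p \<in> pcone M"
proof (induction rule: pcone.induct)
  case (sq0 s)
  have e: "r * r * (s * s) = (r * s) * (r * s)" by (simp only: mult_ac)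
  show ?case unfolding e by (rule pcone.sq0)
next
  case (sq1 s)
  have e: "r * r * (s * s * [:0,1:]) = (r * s) * (r * s) * [:0,1:]" by (simp only: mult_ac)
  show ?case unfolding e by (rule pcone.sq1)
next
  case (sq2 s)
  have e: "r * r * (s * s * [:M,-1:]) = (r * s) * (r * s) * [:M,-1:]" by (simp only: mult_ac)
  show ?case unfolding e by (rule pcone.sq2)
next
  case (add p q)
  have e: "r * r * (p + q) = r * r * p + r * r * q" by (simp only: distrib_left)
  show ?case unfolding e using add.IH by (rule pcone.add)
qed

lemma pcone_smult: "c \<ge> 0 \<Longrightarrow> p \<in> pcone M \<Longrightarrow> smult c p \<in> pcone M"
proof -
  assume c: "c \<ge> 0" and p: "p \<in> pcone M"
  have eq: "smult c p = [:sqrt c:] * [:sqrt c:] * p"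
    by (rule poly_eq_by_eval) (use c in simp)
  show ?thesis unfolding eq by (rule pcone_mult_sq[OF p])
qed

lemma pcone_const: "c \<ge> 0 \<Longrightarrow> [:c:] \<in> pcone M"
proof -
  assume c: "c \<ge> 0"
  have "[:c:] = [:sqrt c:] * [:sqrt c:]" using c by simp
  then show ?thesis using pcone.sq0[of "[:sqrt c:]" M] by simp
qed

lemma XU_identity:
  assumes M: "M > 0"
  shows "[:0,1:] * [:M,-1:] = smult (1/M) ([:M,-1:] * [:M,-1:] * [:0,1:] + [:0,1::real:] * [:0,1:] * [:M,-1:])"
  by (rule poly_eq_by_eval) (use M in \<open>simp add: field_simps\<close>)

lemma pcone_mult_X:
  assumes M: "M > 0"
  shows "p \<in> pcone M \<Longrightarrow> [:0,1:] * p \<in> pcone M"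
proof (induction rule: pcone.induct)
  case (sq0 s)
  have e: "[:0,1:] * (s * s) = s * s * [:0,1:]" by (simp only: mult_ac)
  show ?case unfolding e by (rule pcone.sq1)
next
  case (sq1 s)
  have e: "[:0,1:] * (s * s * [:0,1:]) = (s * [:0,1:]) * (s * [:0,1:])" by (simp only: mult_ac)
  show ?case unfolding e by (rule pcone.sq0)
next
  case (sq2 s)
  let ?X = "[:0,1::real:]" and ?U = "[:M,-1:]"
  have e: "?X * (s * s * ?U) = smult (1/M) ((s * ?U) * (s * ?U) * ?X + (s * ?X) * (s * ?X) * ?U)"
    by (rule poly_eq_by_eval) (use M in \<open>simp add: field_simps\<close>)
  show ?case unfolding e
    using M by (intro pcone_smult pcone.add pcone.sq1 pcone.sq2) auto
next
  case (add p q)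
  have e: "[:0,1:] * (p + q) = [:0,1:] * p + [:0,1:] * q" by (simp only: distrib_left)
  show ?case unfolding e using add.IH by (rule pcone.add)
qed

lemma pcone_mult_U:
  assumes M: "M > 0"
  shows "p \<in> pcone M \<Longrightarrow> [:M,-1:] * p \<in> pcone M"
proof (induction rule: pcone.induct)
  case (sq0 s)
  have e: "[:M,-1:] * (s * s) = s * s * [:M,-1:]" by (simp only: mult_ac)
  show ?case unfolding e by (rule pcone.sq2)
next
  case (sq1 s)
  let ?X = "[:0,1::real:]" and ?U = "[:M,-1:]"
  have e: "?U * (s * s * ?X) = smult (1/M) ((s * ?U) * (s * ?U) * ?X + (s * ?X) * (s * ?X) * ?U)"
    by (rule poly_eq_by_eval) (use M in \<open>simp add: field_simps\<close>)
  show ?case unfolding e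
    using M by (intro pcone_smult pcone.add pcone.sq1 pcone.sq2) auto
next
  case (sq2 s)
  have e: "[:M,-1:] * (s * s * [:M,-1:]) = (s * [:M,-1:]) * (s * [:M,-1:])" by (simp only: mult_ac)
  show ?case unfolding e by (rule pcone.sq0)
next
  case (add p q)
  have e: "[:M,-1:] * (p + q) = [:M,-1:] * p + [:M,-1:] * q" by (simp only: distrib_left)
  show ?case unfolding e using add.IH by (rule pcone.add)
qed

lemma pcone_mult_lin1:
  assumes M: "M > 0" and c: "c \<ge> 0" and p: "p \<in> pcone M"
  shows "[:c,1:] * p \<in> pcone M"
proof -
  have "[:c,1:] * p = [:0,1:] * p + smult c p"
    by (rule poly_eq_by_eval) (simp add: algebra_simps)
  then show ?thesis using pcone_mult_X[OF M p] pcone_smult[OF c p] pcone.add by metis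
qed

lemma pcone_mult_lin2:
  assumes M: "M > 0" and c: "c \<ge> 0" and p: "p \<in> pcone M"
  shows "[:M + c,-1:] * p \<in> pcone M"
proof -
  have "[:M + c,-1:] * p = [:M,-1:] * p + smult c p"
    by (rule poly_eq_by_eval) (simp add: algebra_simps)
  then show ?thesis using pcone_mult_U[OF M p] pcone_smult[OF c p] pcone.add by metis
qed

lemma pcone_mult_quad:
  assumes p: "p \<in> pcone M"
  shows "[:a*a + b*b, -2*a, 1:] * p \<in> pcone M"
proof -
  have "[:a*a + b*b, -2*a, 1:] * p = [:-a,1:] * [:-a,1:] * p + smult (b*b) p"
    by (rule poly_eq_by_eval) (simp add: algebra_simps)
  then show ?thesis using pcone_mult_sq[OF p] pcone_smult[OF _ p, of "b*b"] pcone.add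
    by (metis zero_le_square)
qed

definition cev :: "real poly \<Rightarrow> complex \<Rightarrow> complex" where
  "cev p z = poly (map_poly complex_of_real p) z"

lemma map_poly_of_real_add: "map_poly complex_of_real (p + q) = map_poly of_real p + map_poly of_real q"
  by (rule poly_eqI) (simp add: coeff_map_poly)

lemma map_poly_of_real_mult: "map_poly complex_of_real (p * q) = map_poly of_real p * map_poly of_real q"
  by (rule poly_eqI) (simp add: coeff_map_poly coeff_mult)

lemma cev_add: "cev (p + q) z = cev p z + cev q z"
  by (simp add: cev_def map_poly_of_real_add)

lemma cev_mult: "cev (p * q) z = cev p z * cev q z"
  by (simp add: cev_def map_poly_of_real_mult)

lemma cev_pCons: "cev (pCons a p) z = of_real a + z * cev p z"
  by (simp add: cev_def map_poly_pCons)

lemma cev_0[simp]: "cev 0 z = 0"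
  by (simp add: cev_def)

lemma cev_real: "cev p (of_real x) = of_real (poly p x)"
  by (induction p) (simp_all add: cev_pCons[unfolded cev_def] cev_def)

lemma cev_degree: "degree (map_poly complex_of_real p) = degree p"
  by (rule degree_map_poly) simp

lemma poly_small_degree: "degree (r::real poly) \<le> 1 \<Longrightarrow> r = [:coeff r 0, coeff r 1:]"
  by (rule poly_eqI) (auto simp: coeff_pCons split: nat.split intro: coeff_eq_0)

lemma positive_poly_pcone:
  assumes M: "M > 0"
  shows "(\<forall>t\<in>{0..M}. poly q t > 0) \<Longrightarrow> q \<in> pcone M"
proof (induction "degree q" arbitrary: q rule: less_induct)
  case less
  note pos = less.prems
  show ?case
  proof (cases "degree q = 0")
    case True
    then have "q = [:coeff q 0:]" by (metis degree_0_id)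
    moreover have "coeff q 0 > 0" using pos M True by (metis atLeastAtMost_iff calculation less_eq_real_def order.refl poly_pCons mult_zero_left add_0_right poly_0)
    ultimately show ?thesis using pcone_const[of "coeff q 0" M] by simp
  next
    case False
    let ?Q = "map_poly complex_of_real q"
    have "\<not> (\<exists>a l. a \<noteq> 0 \<and> l = 0 \<and> ?Q = pCons a l)"
      using False cev_degree[of q] by auto
    then obtain z where z: "poly ?Q z = 0" using fundamental_theorem_of_algebra_alt by blast
    then have cz: "cev q z = 0" by (simp add: cev_def)
    have qnz: "q \<noteq> 0" using False by auto
    show ?thesis
    proof (cases "Im z = 0")
      case True
      define r where "r = Re z"
      have "z = of_real r" using True by (simp add: r_def complex_eq_iff)
      then have "poly q r = 0" using cz cev_real[of q r] by simp
      then obtain q' where q': "q = [:-r,1:] * q'" using poly_eq_0_iff_dvd by (metis dvdE)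
      have q'nz: "q' \<noteq> 0" using qnz q' by auto
      have "degree q = degree [:-r,1:] + degree q'" using q' q'nz by (metis degree_mult_eq pCons_eq_0_iff one_neq_zero)
      then have dq': "degree q' < degree q" by simp
      have rout: "r < 0 \<or> r > M"
      proof (rule ccontr)
        assume "\<not> ?thesis"
        then have "r \<in> {0..M}" by auto
        then show False using pos \<open>poly q r = 0\<close> by fastforce
      qed
      show ?thesis
      proof (cases "r < 0")
        case True
        have "\<forall>t\<in>{0..M}. poly q' t > 0"
        proof
          fix t assume t: "t \<in> {0..M}"
          have "poly q t = (t - r) * poly q' t" unfolding q' by (simp add: algebra_simps)
          moreover have "t - r > 0" using t True by auto
          ultimately show "poly q' t > 0" using pos t by (metis zero_less_mult_pos)
        qed
        then have "q' \<in> pcone M" using less dq' by blast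
        then have "[:-r,1:] * q' \<in> pcone M" using pcone_mult_lin1[OF M, of "-r"] True by simp
        then show ?thesis using q' by simp
      next
        case False
        then have rM: "r > M" using rout by auto
        have "\<forall>t\<in>{0..M}. poly (-q') t > 0"
        proof
          fix t assume t: "t \<in> {0..M}"
          have "poly q t = (r - t) * poly (-q') t" unfolding q' by (simp add: algebra_simps)
          moreover have "r - t > 0" using t rM by auto
          ultimately show "poly (-q') t > 0" using pos t by (metis zero_less_mult_pos)
        qed
        then have "-q' \<in> pcone M" using less dq' by (metis degree_minus)
        then have "[:M + (r - M),-1:] * (-q') \<in> pcone M" by (rule pcone_mult_lin2[OF M, rotated]) (use rM in auto)
        moreover have "[:M + (r - M),-1:] * (-q') = q"
          unfolding q' by (rule poly_eq_by_eval) (simp add: algebra_simps)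
        ultimately show ?thesis by metis
      qed
    next
      case False
      define a where "a = Re z"
      define b where "b = Im z"
      define d where "d = [:a*a + b*b, -2*a, 1:]"
      have dnz: "d \<noteq> 0" by (simp add: d_def)
      have dd: "degree d = 2" by (simp add: d_def)
      have cd: "cev d z = 0"
        by (simp add: d_def cev_pCons a_def b_def complex_eq_iff power2_eq_square algebra_simps)
      define r where "r = q mod d"
      define q' where "q' = q div d"
      have qdec: "q = d * q' + r" by (simp add: r_def q'_def)
      have "r = 0 \<or> degree r < 2" using degree_mod_less[OF dnz, of q] dd by (simp add: r_def)
      then have rdeg: "degree r \<le> 1" by auto
      have "cev r z = 0" using cz cd qdec by (simp add: cev_add cev_mult)
      moreover have "r = [:coeff r 0, coeff r 1:]" using poly_small_degree[OF rdeg] .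
      ultimately have "of_real (coeff r 0) + z * of_real (coeff r 1) = 0"
        by (metis cev_pCons cev_def map_poly_0 mult_zero_right add_0_right poly_0)
      then have "coeff r 1 = 0 \<and> coeff r 0 = 0" using False
        by (auto simp: complex_eq_iff)
      then have r0: "r = 0" using \<open>r = [:coeff r 0, coeff r 1:]\<close> by simp
      have dpos: "poly d t > 0" for t
      proof -
        have "poly d t = (t - a)^2 + b^2" by (simp add: d_def power2_eq_square algebra_simps)
        moreover have "b^2 > 0" using False by (simp add: b_def)
        ultimately show ?thesis by (smt (verit) zero_le_power2)
      qed
      have q'nz: "q' \<noteq> 0" using qdec r0 qnz by auto
      have dq': "degree q' < degree q" using qdec r0 q'nz dnz dd by (simp add: degree_mult_eq)
      have "\<forall>t\<in>{0..M}. poly q' t > 0"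
      proof
        fix t assume t: "t \<in> {0..M}"
        have "poly q t = poly d t * poly q' t" using qdec r0 by simp
        then show "poly q' t > 0" using pos t dpos[of t] by (metis zero_less_mult_pos)
      qed
      then have "q' \<in> pcone M" using less dq' by blast
      then have "d * q' \<in> pcone M" unfolding d_def by (rule pcone_mult_quad)
      then show ?thesis using qdec r0 by simp
    qed
  qed
qed



section \<open>Polynomials of operators\<close>

definition herm :: "('a::complex_hilbert \<Rightarrow> 'a) \<Rightarrow> bool" where
  "herm S \<longleftrightarrow> (\<forall>x y. hinner (S x) y = hinner x (S y))"

definition posf :: "('a::complex_hilbert \<Rightarrow> 'a) \<Rightarrow> bool" where
  "posf S \<longleftrightarrow> (\<forall>x. Im (hinner (S x) x) = 0 \<and> Re (hinner (S x) x) \<ge> 0)"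

lemma poly_op_le: "degree p \<le> n \<Longrightarrow> poly_op p P x = (\<Sum>i\<le>n. coeff p i *\<^sub>R (P ^^ i) x)"
  unfolding poly_op_def by (rule sum.mono_neutral_left) (auto simp: coeff_eq_0)

lemma poly_op_pCons:
  assumes "bounded_linear P"
  shows "poly_op (pCons a p) P x = a *\<^sub>R x + P (poly_op p P x)"
proof -
  have lin: "linear P" using assms bounded_linear.linear by blast
  have "poly_op (pCons a p) P x = (\<Sum>i\<le>Suc (degree p). coeff (pCons a p) i *\<^sub>R (P ^^ i) x)"
    by (rule poly_op_le) (simp add: degree_pCons_le)
  also have "\<dots> = a *\<^sub>R x + (\<Sum>i\<le>degree p. coeff p i *\<^sub>R (P ^^ Suc i) x)"
    by (subst sum.atMost_Suc_shift) simp
  also have "(\<Sum>i\<le>degree p. coeff p i *\<^sub>R (P ^^ Suc i) x) = P (poly_op p P x)"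
    unfolding poly_op_def using lin
    by (simp add: real_vector.linear_sum real_vector.linear_scale)
  finally show ?thesis .
qed

lemma poly_op_0[simp]: "poly_op 0 P x = 0"
  by (simp add: poly_op_def)

lemma poly_op_const: "poly_op [:c:] P x = c *\<^sub>R x"
  by (simp add: poly_op_def)

lemma poly_op_X:
  assumes "bounded_linear P"
  shows "poly_op [:0,1:] P x = P x"
  using assms by (simp add: poly_op_pCons poly_op_const)

lemma poly_op_add:
  assumes "bounded_linear P"
  shows "poly_op (p + q) P x = poly_op p P x + poly_op q P x"
proof -
  let ?n = "max (degree p) (degree q)"
  have "poly_op (p + q) P x = (\<Sum>i\<le>?n. coeff (p + q) i *\<^sub>R (P ^^ i) x)"
    by (rule poly_op_le) (simp add: degree_add_le)
  also have "\<dots> = (\<Sum>i\<le>?n. coeff p i *\<^sub>R (P ^^ i) x) + (\<Sum>i\<le>?n. coeff q i *\<^sub>R (P ^^ i) x)"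
    by (simp add: scaleR_add_left sum.distrib)
  also have "\<dots> = poly_op p P x + poly_op q P x"
    using poly_op_le[of p ?n P x] poly_op_le[of q ?n P x] by simp
  finally show ?thesis .
qed

lemma poly_op_smult:
  shows "poly_op (smult c p) P x = c *\<^sub>R poly_op p P x"
proof -
  have "poly_op (smult c p) P x = (\<Sum>i\<le>degree p. coeff (smult c p) i *\<^sub>R (P ^^ i) x)"
    by (rule poly_op_le) (simp add: degree_smult_le)
  also have "\<dots> = c *\<^sub>R poly_op p P x"
    by (simp add: poly_op_def scaleR_sum_right)
  finally show ?thesis .
qed

lemma poly_op_minus: "poly_op (- p) P x = - poly_op p P x"
  using poly_op_smult[of "-1" p P x] by simp

lemma poly_op_diff:
  assumes "bounded_linear P"
  shows "poly_op (p - q) P x = poly_op p P x - poly_op q P x"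
  using poly_op_add[OF assms, of p "-q" x] by (simp add: poly_op_minus)

lemma poly_op_bl:
  assumes "bounded_linear P"
  shows "bounded_linear (poly_op p P)"
proof (induction p)
  case 0 then show ?case by (simp add: bounded_linear_zero[unfolded fun_eq_iff] poly_op_def)
next
  case (pCons a p)
  have "poly_op (pCons a p) P = (\<lambda>x. a *\<^sub>R x + P (poly_op p P x))"
    using assms by (simp add: fun_eq_iff poly_op_pCons)
  moreover have "bounded_linear (\<lambda>x. a *\<^sub>R x + P (poly_op p P x))"
    by (intro bounded_linear_add bounded_linear_scaleR_right
        bounded_linear_compose[OF assms pCons.IH])
  ultimately show ?case by simp
qed

lemma poly_op_mult:
  assumes "bounded_linear P"
  shows "poly_op (p * q) P x = poly_op p P (poly_op q P x)"
proof (induction p arbitrary: x)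
  case 0 then show ?case by simp
next
  case (pCons a p)
  have "pCons a p * q = smult a q + pCons 0 (p * q)" by simp
  then have "poly_op (pCons a p * q) P x = a *\<^sub>R poly_op q P x + P (poly_op (p * q) P x)"
    using assms by (simp add: poly_op_add poly_op_smult poly_op_pCons)
  also have "\<dots> = poly_op (pCons a p) P (poly_op q P x)"
    using assms pCons.IH by (simp add: poly_op_pCons)
  finally show ?case .
qed

lemma poly_op_comm:
  assumes "bounded_linear P"
  shows "poly_op p P (poly_op q P x) = poly_op q P (poly_op p P x)"
  using poly_op_mult[OF assms, of p q x] poly_op_mult[OF assms, of q p x] by (simp add: mult.commute)

lemma poly_op_comm_P:
  assumes "bounded_linear P"
  shows "P (poly_op q P x) = poly_op q P (P x)"
  using poly_op_comm[OF assms, of "[:0,1:]" q x] by (simp add: poly_op_X[OF assms])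

lemma poly_op_commute:
  assumes "bounded_linear P" "bounded_linear R" "\<And>x. R (P x) = P (R x)"
  shows "R (poly_op p P x) = poly_op p P (R x)"
proof (induction p arbitrary: x)
  case 0 then show ?case using assms(2) by (simp add: linear_simps)
next
  case (pCons a p)
  then show ?case using assms by (simp add: poly_op_pCons linear_simps)
qed

lemma poly_op_hscale:
  assumes "cblinear P"
  shows "poly_op p P (hscale c x) = hscale c (poly_op p P x)"
proof (induction p arbitrary: x)
  case 0 then show ?case by simp
next
  case (pCons a p)
  have bl: "bounded_linear P" using assms by (simp add: cblinear_def)
  have "poly_op (pCons a p) P (hscale c x) = a *\<^sub>R hscale c x + P (hscale c (poly_op p P x))"
    using bl pCons.IH by (simp add: poly_op_pCons)
  also have "\<dots> = hscale c (poly_op (pCons a p) P x)"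
    using assms bl by (simp add: cblinear_def poly_op_pCons hscale_add_right
        flip: hscale_of_real) (simp add: hscale_mult mult.commute)
  finally show ?case .
qed

lemma poly_op_cblinear:
  assumes "cblinear P"
  shows "cblinear (poly_op p P)"
  using assms poly_op_bl poly_op_hscale unfolding cblinear_def by blast

lemma poly_op_herm:
  assumes bl: "bounded_linear P" and h: "herm P"
  shows "herm (poly_op p P)"
  unfolding herm_def
proof (induction p)
  case 0 then show ?case by simp
next
  case (pCons a p)
  show ?case
  proof (intro allI)
    fix x y
    have "hinner (poly_op (pCons a p) P x) y = of_real a * hinner x y + hinner (P (poly_op p P x)) y"
      using bl by (simp add: poly_op_pCons hinner_add_left hinner_scaleR_left)
    also have "hinner (P (poly_op p P x)) y = hinner (poly_op p P x) (P y)"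
      using h by (simp add: herm_def)
    also have "\<dots> = hinner x (poly_op p P (P y))" using pCons by simp
    also have "poly_op p P (P y) = P (poly_op p P y)" using poly_op_comm_P[OF bl] by simp
    finally show "hinner (poly_op (pCons a p) P x) y = hinner x (poly_op (pCons a p) P y)"
      using bl by (simp add: poly_op_pCons hinner_add_right hinner_scaleR_right)
  qed
qed



section \<open>Positive operators\<close>

lemma cbl_bl: "cblinear P \<Longrightarrow> bounded_linear P"
  by (simp add: cblinear_def)

lemma cbl_hscale: "cblinear P \<Longrightarrow> P (hscale c x) = hscale c (P x)"
  by (simp add: cblinear_def)

lemma herm_of_posf:
  assumes P: "cblinear P" and pos: "posf P"
  shows "herm P"
  unfolding herm_def
proof (intro allI)
  fix x y
  have bl: "bounded_linear P" using P by (simp add: cblinear_def)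
  have im: "\<And>v. Im (hinner (P v) v) = 0" using pos by (simp add: posf_def)
  have e1: "hinner (P (x + y)) (x + y) = hinner (P x) x + hinner (P x) y + hinner (P y) x + hinner (P y) y"
    using bl by (simp add: linear_simps hinner_add_left hinner_add_right)
  have e2: "hinner (P (x + hscale \<i> y)) (x + hscale \<i> y) =
      hinner (P x) x - \<i> * hinner (P x) y + \<i> * hinner (P y) x + hinner (P y) y"
    using bl P
    by (simp add: linear_simps hinner_add_left hinner_add_right cbl_hscale hinner_scale_left
        hinner_scale_right algebra_simps)
  have a: "Im (hinner (P x) y) + Im (hinner (P y) x) = 0"
    using im[of "x+y"] im[of x] im[of y] e1 by simp
  have b: "- Re (hinner (P x) y) + Re (hinner (P y) x) = 0"
    using im[of "x + hscale \<i> y"] im[of x] im[of y] e2 by simp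
  have "hinner (P y) x = cnj (hinner (P x) y)" using a b by (simp add: complex_eq_iff)
  then have "hinner (P y) x = hinner y (P x)" by (metis hinner_cnj)
  then show "hinner (P y) x = hinner y (P x)" .
qed

lemma herm_swap: "herm S \<Longrightarrow> hinner (S x) y = hinner x (S y)"
  by (simp add: herm_def)

lemma hinner_op_bound: "bounded_linear P \<Longrightarrow> cmod (hinner (P x) x) \<le> onorm P * (norm x)^2"
proof -
  assume bl: "bounded_linear P"
  have "cmod (hinner (P x) x) \<le> norm (P x) * norm x" by (rule cauchy_schwarz)
  also have "\<dots> \<le> onorm P * norm x * norm x" by (simp add: mult_right_mono onorm[OF bl])
  finally show ?thesis by (simp add: power2_eq_square mult.assoc)
qed

lemma posf_MP:
  assumes P: "cblinear P" and pos: "posf P"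
  shows "posf (\<lambda>x. onorm P *\<^sub>R x - P x)"
  unfolding posf_def
proof (intro allI conjI)
  fix x
  have bl: "bounded_linear P" using P by (simp add: cblinear_def)
  have e: "hinner (onorm P *\<^sub>R x - P x) x = of_real (onorm P * (norm x)^2) - hinner (P x) x"
    by (simp add: hinner_diff_left hinner_scaleR_left hinner_self)
  show "Im (hinner (onorm P *\<^sub>R x - P x) x) = 0" using pos e by (simp add: posf_def)
  have "Re (hinner (P x) x) \<le> cmod (hinner (P x) x)" by (rule complex_Re_le_cmod)
  also have "\<dots> \<le> onorm P * (norm x)^2" by (rule hinner_op_bound[OF bl])
  finally show "Re (hinner (onorm P *\<^sub>R x - P x) x) \<ge> 0" using e by simp
qed

lemma posf_add: "posf S \<Longrightarrow> posf T \<Longrightarrow> posf (\<lambda>x. S x + T x)"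
  by (simp add: posf_def hinner_add_left)

lemma posf_conj:
  assumes "herm S" "posf W"
  shows "posf (\<lambda>x. S (W (S x)))"
  using assms by (simp add: posf_def herm_def)

lemma posf_pcone:
  assumes P: "cblinear P" and pos: "posf P"
  shows "q \<in> pcone (onorm P) \<Longrightarrow> posf (poly_op q P)"
proof (induction rule: pcone.induct)
  have bl: "bounded_linear P" using P by (simp add: cblinear_def)
  have hP: "herm P" using herm_of_posf[OF P pos] .
  have hs: "\<And>s x y. hinner (poly_op s P x) y = hinner x (poly_op s P y)"
    using poly_op_herm[OF bl hP] by (simp add: herm_def)
  {
    case (sq0 s)
    show ?case unfolding posf_def
    proof
      fix x
      have "hinner (poly_op (s * s) P x) x = hinner (poly_op s P x) (poly_op s P x)"
        by (simp add: poly_op_mult[OF bl] hs)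
      then show "Im (hinner (poly_op (s * s) P x) x) = 0 \<and> Re (hinner (poly_op (s * s) P x) x) \<ge> 0"
        by (simp add: hinner_self)
    qed
  next
    case (sq1 s)
    show ?case unfolding posf_def
    proof
      fix x
      have e: "s * s * [:0,1:] = s * ([:0,1:] * s)" by (simp only: mult_ac)
      have "hinner (poly_op (s * s * [:0,1:]) P x) x = hinner (P (poly_op s P x)) (poly_op s P x)"
        unfolding e poly_op_mult[OF bl] poly_op_X[OF bl] hs ..
      then show "Im (hinner (poly_op (s * s * [:0,1:]) P x) x) = 0 \<and> Re (hinner (poly_op (s * s * [:0,1:]) P x) x) \<ge> 0"
        using pos by (simp add: posf_def)
    qed
  next
    case (sq2 s)
    have pm: "posf (\<lambda>x. onorm P *\<^sub>R x - P x)" by (rule posf_MP[OF P pos])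
    show ?case unfolding posf_def
    proof
      fix x
      have e: "s * s * [:onorm P,-1:] = s * ([:onorm P,-1:] * s)" by (simp only: mult_ac)
      have e2: "poly_op [:onorm P,-1:] P y = onorm P *\<^sub>R y - P y" for y
        using bl by (simp add: poly_op_pCons poly_op_const linear_simps)
      have "hinner (poly_op (s * s * [:onorm P,-1:]) P x) x =
            hinner (onorm P *\<^sub>R (poly_op s P x) - P (poly_op s P x)) (poly_op s P x)"
        unfolding e poly_op_mult[OF bl] hs e2 ..
      then show "Im (hinner (poly_op (s * s * [:onorm P,-1:]) P x) x) = 0 \<and> Re (hinner (poly_op (s * s * [:onorm P,-1:]) P x) x) \<ge> 0"
        using pm unfolding posf_def by metis
    qed
  next
    case (add p q)
    show ?case unfolding posf_def
    proof
      fix x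
      have "hinner (poly_op (p + q) P x) x = hinner (poly_op p P x) x + hinner (poly_op q P x) x"
        by (simp add: poly_op_add[OF bl] hinner_add_left)
      then show "Im (hinner (poly_op (p + q) P x) x) = 0 \<and> Re (hinner (poly_op (p + q) P x) x) \<ge> 0"
        using add.IH by (simp add: posf_def)
    qed
  }
qed

lemma onorm_zero_op: "bounded_linear P \<Longrightarrow> onorm P = 0 \<Longrightarrow> P x = 0"
  using onorm_eq_0 by blast

lemma poly_op_at_zero:
  assumes bl: "bounded_linear P" and z: "onorm P = 0"
  shows "poly_op q P x = poly q 0 *\<^sub>R x"
proof (cases q)
  case (pCons a p)
  then show ?thesis using bl onorm_zero_op[OF bl z] by (simp add: poly_op_pCons)
qed

lemma poly_pos:
  assumes P: "cblinear P" and pos: "posf P" and q: "\<forall>t\<in>{0..onorm P}. poly q t > 0"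
  shows "posf (poly_op q P)"
proof (cases "onorm P = 0")
  case True
  have bl: "bounded_linear P" using P by (simp add: cblinear_def)
  have "poly q 0 > 0" using q True by auto
  then show ?thesis
    using poly_op_at_zero[OF bl True]
    by (simp add: posf_def hinner_scaleR_left hinner_self)
next
  case False
  then have "onorm P > 0" using onorm_pos_le[OF cbl_bl[OF P]] by simp
  then have "q \<in> pcone (onorm P)" using positive_poly_pcone q by blast
  then show ?thesis by (rule posf_pcone[OF P pos])
qed

lemma le_by_eps:
  fixes a b :: real
  assumes "\<And>e. e > 0 \<Longrightarrow> a \<le> b + e"
  shows "a \<le> b"
  using assms field_le_epsilon by blast

lemma poly_norm_bound:
  assumes P: "cblinear P" and pos: "posf P" and c: "\<forall>t\<in>{0..onorm P}. \<bar>poly p t\<bar> \<le> c"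
  shows "onorm (poly_op p P) \<le> c"
proof (rule onorm_bound)
  have bl: "bounded_linear P" using P by (simp add: cblinear_def)
  have hP: "herm P" using herm_of_posf[OF P pos] .
  have hp: "herm (poly_op p P)" using poly_op_herm[OF bl hP] .
  have "0 \<in> {0..onorm P}" using onorm_pos_le[OF bl] by simp
  then show c0: "0 \<le> c" using c by fastforce
  fix x
  have "norm (poly_op p P x) \<le> (c + e) * norm x" if e: "e > 0" for e
  proof -
    let ?q = "[:(c + e)^2:] - p * p"
    have "\<forall>t\<in>{0..onorm P}. poly ?q t > 0"
    proof
      fix t assume t: "t \<in> {0..onorm P}"
      have "\<bar>poly p t\<bar> < c + e" using c t e by fastforce
      then have "\<bar>poly p t\<bar>^2 < (c + e)^2" by (rule power_strict_mono) auto
      then have "(poly p t)^2 < (c + e)^2" by simp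
      then show "poly ?q t > 0" by (simp add: power2_eq_square)
    qed
    then have "posf (poly_op ?q P)" by (rule poly_pos[OF P pos])
    then have "Re (hinner (poly_op ?q P x) x) \<ge> 0" by (simp add: posf_def)
    moreover have "poly_op ?q P x = (c + e)^2 *\<^sub>R x - poly_op p P (poly_op p P x)"
      using bl by (simp add: poly_op_diff poly_op_const poly_op_mult)
    moreover have "hinner (poly_op p P (poly_op p P x)) x = hinner (poly_op p P x) (poly_op p P x)"
      using hp by (simp add: herm_def)
    ultimately have "(norm (poly_op p P x))^2 \<le> ((c + e) * norm x)^2"
      by (simp add: hinner_diff_left hinner_scaleR_left hinner_self power_mult_distrib)
    then show ?thesis using c0 e by (simp add: power2_le_iff_abs_le)
  qed
  then show "norm (poly_op p P x) \<le> c * norm x"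
  proof (cases "x = 0")
    case False
    show ?thesis
    proof (rule le_by_eps)
      fix e :: real assume e: "e > 0"
      have "norm (poly_op p P x) \<le> (c + e / norm x) * norm x" using e False by (intro \<open>\<And>e. e > 0 \<Longrightarrow> _\<close>) simp
      then show "norm (poly_op p P x) \<le> c * norm x + e" using False by (simp add: algebra_simps)
    qed
  qed (use \<open>\<And>e. e > 0 \<Longrightarrow> _\<close>[of 1] in simp)
qed

lemma key_ineq:
  assumes P: "cblinear P" and pos: "posf P"
  shows "(norm (P x))^2 \<le> onorm P * Re (hinner (P x) x)"
proof (rule le_by_eps)
  fix e :: real assume e: "e > 0"
  have bl: "bounded_linear P" using P by (simp add: cblinear_def)
  have hP: "herm P" using herm_of_posf[OF P pos] .
  define M where "M = onorm P"
  let ?q = "[:e / ((norm x)^2 + 1), M, -1:]"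
  have ep: "e / ((norm x)^2 + 1) > 0" using e by (intro divide_pos_pos) (auto simp: add_nonneg_pos)
  have "\<forall>t\<in>{0..onorm P}. poly ?q t > 0"
  proof
    fix t assume "t \<in> {0..onorm P}"
    then have "t * (M - t) \<ge> 0" by (simp add: M_def)
    then show "poly ?q t > 0" using ep by (simp add: algebra_simps)
  qed
  then have "posf (poly_op ?q P)" by (rule poly_pos[OF P pos])
  then have "Re (hinner (poly_op ?q P x) x) \<ge> 0" by (simp add: posf_def)
  moreover have "poly_op ?q P x = (e / ((norm x)^2 + 1)) *\<^sub>R x + M *\<^sub>R P x - P (P x)"
    using bl by (simp add: poly_op_pCons linear_simps algebra_simps)
  moreover have "hinner (P (P x)) x = hinner (P x) (P x)" using hP by (simp add: herm_def)
  ultimately have "(norm (P x))^2 \<le> M * Re (hinner (P x) x) + e * ((norm x)^2 / ((norm x)^2 + 1))"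
    by (simp add: hinner_diff_left hinner_add_left hinner_scaleR_left hinner_self)
  also have "e * ((norm x)^2 / ((norm x)^2 + 1)) \<le> e * 1"
    using e by (intro mult_left_mono) (auto simp: divide_le_eq_1 add_nonneg_pos)
  finally show "(norm (P x))^2 \<le> onorm P * Re (hinner (P x) x) + e" by (simp add: M_def)
qed

lemma posf_kernel:
  assumes P: "cblinear P" and pos: "posf P" and z: "Re (hinner (P y) y) = 0"
  shows "P y = 0"
  using key_ineq[OF P pos, of y] z by simp



section \<open>Approximation and operator limits\<close>

lemma rpf_poly:
  fixes g :: "real \<Rightarrow> real"
  shows "real_polynomial_function g \<Longrightarrow> \<exists>p. \<forall>x. g x = poly p x"
proof (induction rule: real_polynomial_function.induct)
  case (linear f)
  have "f x = poly [:0, f 1:] x" for x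
    using linear_simps(5)[OF linear, of x 1] by simp
  then show ?case by blast
next
  case (const c)
  then show ?case by (intro exI[of _ "[:c:]"]) simp
next
  case (add f g)
  then obtain p q where "\<forall>x. f x = poly p x" "\<forall>x. g x = poly q x" by blast
  then show ?case by (intro exI[of _ "p + q"]) simp
next
  case (mult f g)
  then obtain p q where "\<forall>x. f x = poly p x" "\<forall>x. g x = poly q x" by blast
  then show ?case by (intro exI[of _ "p * q"]) simp
qed

lemma weierstrass_poly:
  fixes f :: "real \<Rightarrow> real"
  assumes f: "continuous_on {0..M} f"
  shows "\<exists>p :: nat \<Rightarrow> real poly. uniform_limit {0..M} (\<lambda>n t. poly (p n) t) f sequentially"
proof -
  have "\<exists>q. \<forall>t\<in>{0..M}. \<bar>f t - poly q t\<bar> < 1 / (Suc n)" for n :: nat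
  proof -
    obtain g where g: "real_polynomial_function g" "\<And>x. x \<in> {0..M} \<Longrightarrow> \<bar>f x - g x\<bar> < 1 / Suc n"
      using Stone_Weierstrass_real_polynomial_function[OF compact_Icc f, of "1 / Suc n"] by auto
    obtain q where "\<forall>x. g x = poly q x" using rpf_poly[OF g(1)] by blast
    then show ?thesis using g(2) by (intro exI[of _ q]) auto
  qed
  then obtain p where p: "\<And>n. \<forall>t\<in>{0..M}. \<bar>f t - poly (p n) t\<bar> < 1 / Suc n" by metis
  have "uniform_limit {0..M} (\<lambda>n t. poly (p n) t) f sequentially"
    unfolding uniform_limit_iff
  proof (intro allI impI)
    fix e :: real assume e: "e > 0"
    obtain N :: nat where N: "1 / Suc N < e" using e by (metis nat_approx_posE)
    show "\<forall>\<^sub>F n in sequentially. \<forall>t\<in>{0..M}. dist (poly (p n) t) (f t) < e"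
    proof (rule eventually_sequentiallyI[of N])
      fix n assume n: "n \<ge> N"
      have "1 / real (Suc n) \<le> 1 / Suc N" using n by (simp add: frac_le)
      then show "\<forall>t\<in>{0..M}. dist (poly (p n) t) (f t) < e"
        using p[of n] N by (auto simp: dist_real_def abs_minus_commute)
    qed
  qed
  then show ?thesis by blast
qed

definition od :: "('a::real_normed_vector \<Rightarrow> 'b::real_normed_vector) \<Rightarrow> ('a \<Rightarrow> 'b) \<Rightarrow> real" where
  "od F G = onorm (\<lambda>x. F x - G x)"

lemma od_nonneg: "bounded_linear F \<Longrightarrow> bounded_linear G \<Longrightarrow> od F G \<ge> 0"
  unfolding od_def by (intro onorm_pos_le bounded_linear_sub)

lemma od_triangle:
  assumes "bounded_linear F" "bounded_linear G" "bounded_linear H"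
  shows "od F H \<le> od F G + od G H"
proof -
  have "onorm (\<lambda>x. (F x - G x) + (G x - H x)) \<le> onorm (\<lambda>x. F x - G x) + onorm (\<lambda>x. G x - H x)"
    by (intro onorm_triangle bounded_linear_sub assms)
  then show ?thesis by (simp add: od_def)
qed

lemma od_sym:
  assumes "bounded_linear F" "bounded_linear G"
  shows "od F G = od G F"
proof -
  have "onorm (\<lambda>x. - (F x - G x)) = onorm (\<lambda>x. F x - G x)"
    by (rule onorm_neg)
  then show ?thesis by (simp add: od_def)
qed

lemma od_point:
  assumes "bounded_linear F" "bounded_linear G"
  shows "norm (F x - G x) \<le> od F G * norm x"
  unfolding od_def using onorm[OF bounded_linear_sub[OF assms]] by simp

lemma od_zero:
  assumes "bounded_linear F" "bounded_linear G" "od F G = 0"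
  shows "F = G"
proof -
  have "\<forall>x. F x - G x = 0" using onorm_eq_0[OF bounded_linear_sub[OF assms(1,2)]] assms(3)
    by (simp add: od_def)
  then show ?thesis by auto
qed

lemma od_poly:
  assumes bl: "bounded_linear P"
  shows "od (poly_op p P) (poly_op q P) = onorm (poly_op (p - q) P)"
proof -
  have "poly_op (p - q) P = (\<lambda>x. poly_op p P x - poly_op q P x)"
    by (rule ext) (rule poly_op_diff[OF bl])
  then show ?thesis by (simp add: od_def)
qed

lemma op_complete:
  fixes F :: "nat \<Rightarrow> 'a::real_normed_vector \<Rightarrow> 'b::banach"
  assumes bl: "\<And>n. bounded_linear (F n)"
    and C: "\<And>e. e > 0 \<Longrightarrow> \<exists>N. \<forall>m\<ge>N. \<forall>n\<ge>N. od (F m) (F n) < e"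
  shows "\<exists>X. bounded_linear X \<and> (\<lambda>n. od (F n) X) \<longlonglongrightarrow> 0"
proof -
  define B where "B n = Blinfun (F n)" for n
  have Bap: "blinfun_apply (B n) = F n" for n using bl by (simp add: B_def bounded_linear_Blinfun_apply)
  have nB: "norm (B m - B n) = od (F m) (F n)" for m n
    by (simp add: norm_blinfun.rep_eq minus_blinfun.rep_eq Bap od_def)
  have "Cauchy B"
    unfolding Cauchy_def dist_norm nB using C by blast
  then obtain L where L: "B \<longlonglongrightarrow> L" using Cauchy_convergent_iff convergent_def by blast
  have "(\<lambda>n. norm (B n - L)) \<longlonglongrightarrow> 0"
    using L by (simp add: tendsto_norm_zero_iff LIM_zero_iff)
  moreover have "norm (B n - L) = od (F n) (blinfun_apply L)" for n
    by (simp add: norm_blinfun.rep_eq minus_blinfun.rep_eq Bap od_def)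
  ultimately show ?thesis using blinfun.bounded_linear_right by (intro exI[of _ "blinfun_apply L"]) auto
qed

lemma od_tendsto_point:
  assumes "\<And>n. bounded_linear (F n)" "bounded_linear X" "(\<lambda>n. od (F n) X) \<longlonglongrightarrow> 0"
  shows "(\<lambda>n. F n x) \<longlonglongrightarrow> X x"
proof -
  have "(\<lambda>n. od (F n) X * norm x) \<longlonglongrightarrow> 0 * norm x"
    by (intro tendsto_mult assms tendsto_const)
  then have g: "(\<lambda>n. od (F n) X * norm x) \<longlonglongrightarrow> 0" by simp
  have "(\<lambda>n. F n x - X x) \<longlonglongrightarrow> 0"
    by (rule Lim_null_comparison[OF _ g]) (simp add: od_point assms)
  then have "(\<lambda>n. norm (F n x - X x)) \<longlonglongrightarrow> 0" by (simp add: tendsto_norm_zero_iff)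
  then show ?thesis by (simp add: tendsto_norm_zero_iff LIM_zero_iff)
qed



section \<open>The functional calculus\<close>

abbreviation UL :: "real \<Rightarrow> (nat \<Rightarrow> real poly) \<Rightarrow> (real \<Rightarrow> real) \<Rightarrow> bool" where
  "UL M p f \<equiv> uniform_limit {0..M} (\<lambda>n t. poly (p n) t) f sequentially"

lemma tendsto_hscale:
  assumes "a \<longlonglongrightarrow> A"
  shows "(\<lambda>n. hscale c (a n)) \<longlonglongrightarrow> hscale c A"
proof -
  have "(\<lambda>n. norm (a n - A)) \<longlonglongrightarrow> 0" using assms by (simp add: tendsto_norm_zero_iff LIM_zero_iff)
  then have "(\<lambda>n. cmod c * norm (a n - A)) \<longlonglongrightarrow> cmod c * 0" by (intro tendsto_mult tendsto_const)
  then have "(\<lambda>n. norm (hscale c (a n) - hscale c A)) \<longlonglongrightarrow> 0"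
    by (simp add: hscale_diff_right[symmetric] norm_hscale)
  then show ?thesis by (simp add: tendsto_norm_zero_iff LIM_zero_iff)
qed

lemma ul_close_bound:
  assumes P: "cblinear P" "posf P"
    and e: "e > 0"
    and p: "\<forall>t\<in>{0..onorm P}. dist (poly p t) (f t) < e"
    and q: "\<forall>t\<in>{0..onorm P}. dist (poly q t) (f t) < e"
  shows "od (poly_op p P) (poly_op q P) \<le> 2 * e"
proof -
  have "\<forall>t\<in>{0..onorm P}. \<bar>poly (p - q) t\<bar> \<le> 2 * e"
  proof
    fix t assume t: "t \<in> {0..onorm P}"
    show "\<bar>poly (p - q) t\<bar> \<le> 2 * e" using p[rule_format, OF t] q[rule_format, OF t]
      by (simp add: dist_real_def abs_if split: if_splits)
  qed
  then have "onorm (poly_op (p - q) P) \<le> 2 * e" by (rule poly_norm_bound[OF P])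
  then show ?thesis using od_poly[OF cbl_bl[OF P(1)]] by simp
qed

lemma ul_close:
  assumes P: "cblinear P" "posf P"
    and p: "UL (onorm P) p f" and q: "UL (onorm P) q f"
  shows "(\<lambda>n. od (poly_op (p n) P) (poly_op (q n) P)) \<longlonglongrightarrow> 0"
proof (rule LIMSEQ_I)
  fix r :: real assume r: "r > 0"
  have bl: "bounded_linear P" using P by (simp add: cblinear_def)
  have "\<forall>\<^sub>F n in sequentially. (\<forall>t\<in>{0..onorm P}. dist (poly (p n) t) (f t) < r / 4) \<and>
                               (\<forall>t\<in>{0..onorm P}. dist (poly (q n) t) (f t) < r / 4)"
    using r by (intro eventually_conj uniform_limitD[OF p] uniform_limitD[OF q]) auto
  then obtain N where N: "\<And>n. n \<ge> N \<Longrightarrow> (\<forall>t\<in>{0..onorm P}. dist (poly (p n) t) (f t) < r / 4) \<and>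
                               (\<forall>t\<in>{0..onorm P}. dist (poly (q n) t) (f t) < r / 4)"
    by (auto simp: eventually_sequentially)
  show "\<exists>no. \<forall>n\<ge>no. norm (od (poly_op (p n) P) (poly_op (q n) P) - 0) < r"
  proof (intro exI allI impI)
    fix n assume n: "n \<ge> N"
    have "od (poly_op (p n) P) (poly_op (q n) P) \<le> 2 * (r / 4)"
      using N[OF n] r by (intro ul_close_bound[OF P]) auto
    moreover have "od (poly_op (p n) P) (poly_op (q n) P) \<ge> 0"
      by (intro od_nonneg poly_op_bl bl)
    ultimately show "norm (od (poly_op (p n) P) (poly_op (q n) P) - 0) < r" using r by simp
  qed
qed

lemma fcalc_char:
  assumes P: "cblinear P" "posf P" and f: "continuous_on {0..onorm P} f"
  shows "cblinear (fcalc f P) \<and>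
    (\<forall>p. UL (onorm P) p f \<longrightarrow> ((\<lambda>n. onorm (\<lambda>x. poly_op (p n) P x - fcalc f P x)) \<longlonglongrightarrow> 0))"
proof -
  have bl: "bounded_linear P" using P by (simp add: cblinear_def)
  have blp: "\<And>p. bounded_linear (poly_op p P)" by (rule poly_op_bl[OF bl])
  define Q where "Q X \<longleftrightarrow> cblinear X \<and>
    (\<forall>p. UL (onorm P) p f \<longrightarrow> ((\<lambda>n. onorm (\<lambda>x. poly_op (p n) P x - X x)) \<longlonglongrightarrow> 0))" for X :: "'a \<Rightarrow> 'a"
  obtain p0 where p0: "UL (onorm P) p0 f" using weierstrass_poly[OF f] by blast
  have "\<exists>X. bounded_linear X \<and> (\<lambda>n. od (poly_op (p0 n) P) X) \<longlonglongrightarrow> 0"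
  proof (rule op_complete[OF blp])
    fix e :: real assume e: "e > 0"
    have "\<forall>\<^sub>F n in sequentially. \<forall>t\<in>{0..onorm P}. dist (poly (p0 n) t) (f t) < e / 4"
      using e by (intro uniform_limitD[OF p0]) auto
    then obtain N where N: "\<And>n. n \<ge> N \<Longrightarrow> \<forall>t\<in>{0..onorm P}. dist (poly (p0 n) t) (f t) < e / 4"
      by (auto simp: eventually_sequentially)
    show "\<exists>N. \<forall>m\<ge>N. \<forall>n\<ge>N. od (poly_op (p0 m) P) (poly_op (p0 n) P) < e"
    proof (intro exI allI impI)
      fix m n assume "m \<ge> N" "n \<ge> N"
      then have "od (poly_op (p0 m) P) (poly_op (p0 n) P) \<le> 2 * (e / 4)"
        using N e by (intro ul_close_bound[OF P]) auto
      then show "od (poly_op (p0 m) P) (poly_op (p0 n) P) < e" using e by simp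
    qed
  qed
  then obtain X where Xbl: "bounded_linear X" and X: "(\<lambda>n. od (poly_op (p0 n) P) X) \<longlonglongrightarrow> 0" by blast
  have QX: "Q X"
    unfolding Q_def
  proof (intro conjI allI impI)
    show "cblinear X"
      unfolding cblinear_def
    proof (intro conjI allI Xbl)
      fix c x
      have "(\<lambda>n. poly_op (p0 n) P (hscale c x)) \<longlonglongrightarrow> X (hscale c x)"
        by (rule od_tendsto_point[OF blp Xbl X])
      moreover have "(\<lambda>n. poly_op (p0 n) P (hscale c x)) \<longlonglongrightarrow> hscale c (X x)"
        unfolding poly_op_hscale[OF P(1)]
        by (rule tendsto_hscale[OF od_tendsto_point[OF blp Xbl X]])
      ultimately show "X (hscale c x) = hscale c (X x)" by (rule LIMSEQ_unique)
    qed
  next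
    fix p assume p: "UL (onorm P) p f"
    have lim: "(\<lambda>n. od (poly_op (p n) P) (poly_op (p0 n) P) + od (poly_op (p0 n) P) X) \<longlonglongrightarrow> 0 + 0"
      by (intro tendsto_add ul_close[OF P p p0] X)
    have "(\<lambda>n. od (poly_op (p n) P) X) \<longlonglongrightarrow> 0"
    proof (rule Lim_null_comparison[OF _ lim[simplified]])
      show "\<forall>\<^sub>F n in sequentially. norm (od (poly_op (p n) P) X) \<le> od (poly_op (p n) P) (poly_op (p0 n) P) + od (poly_op (p0 n) P) X"
        using od_nonneg[OF blp Xbl] od_triangle[OF blp blp Xbl] by simp
    qed
    then show "(\<lambda>n. onorm (\<lambda>x. poly_op (p n) P x - X x)) \<longlonglongrightarrow> 0" by (simp add: od_def)
  qed
  have uniq: "Y = X" if QY: "Q Y" for Y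
  proof -
    have Ybl: "bounded_linear Y" using QY by (simp add: Q_def cblinear_def)
    have Y: "(\<lambda>n. od (poly_op (p0 n) P) Y) \<longlonglongrightarrow> 0" using QY p0 by (simp add: Q_def od_def)
    have lim: "(\<lambda>n. od (poly_op (p0 n) P) X + od (poly_op (p0 n) P) Y) \<longlonglongrightarrow> 0 + 0"
      by (intro tendsto_add X Y)
    have "od X Y \<le> 0 + 0"
    proof (rule tendsto_le[OF sequentially_bot lim tendsto_const])
      show "\<forall>\<^sub>F n in sequentially. od X Y \<le> od (poly_op (p0 n) P) X + od (poly_op (p0 n) P) Y"
        using od_triangle[OF Xbl blp Ybl] od_sym[OF Xbl blp] by simp
    qed
    then have "od X Y = 0" using od_nonneg[OF Xbl Ybl] by simp
    then show "Y = X" using od_zero[OF Xbl Ybl] by simp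
  qed
  have fe: "fcalc f P = (THE X. Q X)" unfolding fcalc_def Q_def ..
  have "Q (THE X. Q X)" by (rule theI[of Q X, OF QX uniq])
  then have "Q (fcalc f P)" unfolding fe .
  then show ?thesis by (simp add: Q_def)
qed



lemma positive_op_iff: "positive_op P \<longleftrightarrow> cblinear P \<and> posf P"
  by (simp add: positive_op_def posf_def)

lemma tendsto_hinner_left:
  assumes "a \<longlonglongrightarrow> A"
  shows "(\<lambda>n. hinner (a n) y) \<longlonglongrightarrow> hinner A y"
proof -
  have "(\<lambda>n. norm (a n - A)) \<longlonglongrightarrow> 0" using assms by (simp add: tendsto_norm_zero_iff LIM_zero_iff)
  then have g: "(\<lambda>n. norm (a n - A) * norm y) \<longlonglongrightarrow> 0" using tendsto_mult_left_zero by blast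
  have "(\<lambda>n. hinner (a n) y - hinner A y) \<longlonglongrightarrow> 0"
  proof (rule Lim_null_comparison[OF _ g])
    show "\<forall>\<^sub>F n in sequentially. norm (hinner (a n) y - hinner A y) \<le> norm (a n - A) * norm y"
      by (intro always_eventually allI) (simp add: hinner_diff_left[symmetric] cauchy_schwarz)
  qed
  then show ?thesis by (simp add: LIM_zero_iff)
qed

lemma tendsto_hinner_right:
  assumes "a \<longlonglongrightarrow> A"
  shows "(\<lambda>n. hinner y (a n)) \<longlonglongrightarrow> hinner y A"
proof -
  have "(\<lambda>n. cnj (hinner (a n) y)) \<longlonglongrightarrow> cnj (hinner A y)"
    by (intro tendsto_cnj tendsto_hinner_left assms)
  then show ?thesis by (metis (no_types) hinner_cnj[of y] hinner_cnj[of y A] ext)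
qed

context
  fixes P :: "'a::complex_hilbert \<Rightarrow> 'a" and f :: "real \<Rightarrow> real"
  assumes P: "cblinear P" "posf P" and f: "continuous_on {0..onorm P} f"
begin

lemma P_bl: "bounded_linear P" using P by (simp add: cblinear_def)

lemma blp: "bounded_linear (poly_op p P)" by (rule poly_op_bl[OF P_bl])

lemma fcalc_cbl: "cblinear (fcalc f P)"
  using fcalc_char[OF P f] by simp

lemma fcalc_bl: "bounded_linear (fcalc f P)"
  using fcalc_cbl by (simp add: cblinear_def)

lemma fcalc_lim: "UL (onorm P) p f \<Longrightarrow> (\<lambda>n. od (poly_op (p n) P) (fcalc f P)) \<longlonglongrightarrow> 0"
  using fcalc_char[OF P f] by (simp add: od_def)

lemma fcalc_pt: "UL (onorm P) p f \<Longrightarrow> (\<lambda>n. poly_op (p n) P x) \<longlonglongrightarrow> fcalc f P x"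
  by (rule od_tendsto_point[OF blp fcalc_bl fcalc_lim])

lemma fcalc_seq: "\<exists>p. UL (onorm P) p f"
  using weierstrass_poly[OF f] .

lemma fcalc_herm: "herm (fcalc f P)"
  unfolding herm_def
proof (intro allI)
  fix x y
  obtain p where p: "UL (onorm P) p f" using fcalc_seq by blast
  have hp: "herm (poly_op q P)" for q using poly_op_herm[OF P_bl herm_of_posf[OF P]] .
  have "(\<lambda>n. hinner (poly_op (p n) P x) y) \<longlonglongrightarrow> hinner (fcalc f P x) y"
    by (intro tendsto_hinner_left fcalc_pt p)
  moreover have "(\<lambda>n. hinner (poly_op (p n) P x) y) \<longlonglongrightarrow> hinner x (fcalc f P y)"
    using hp by (simp add: herm_def) (intro tendsto_hinner_right fcalc_pt p)
  ultimately show "hinner (fcalc f P x) y = hinner x (fcalc f P y)" by (rule LIMSEQ_unique)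
qed

lemma fcalc_posf:
  assumes fpos: "\<forall>t\<in>{0..onorm P}. f t \<ge> 0"
  shows "posf (fcalc f P)"
  unfolding posf_def
proof (intro allI conjI)
  fix x
  let ?X = "fcalc f P"
  have "hinner (?X x) x = hinner x (?X x)" using fcalc_herm by (simp add: herm_def)
  then have "hinner (?X x) x = cnj (hinner (?X x) x)" by (metis hinner_cnj)
  then show "Im (hinner (?X x) x) = 0" by (metis cnj.simps(2) neg_equal_zero)
  obtain p where p: "UL (onorm P) p f" using fcalc_seq by blast
  have lim: "(\<lambda>n. Re (hinner (poly_op (p n) P x) x)) \<longlonglongrightarrow> Re (hinner (?X x) x)"
    by (intro tendsto_Re tendsto_hinner_left fcalc_pt p)
  show "Re (hinner (?X x) x) \<ge> 0"
  proof (rule le_by_eps)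
    fix e :: real assume e: "e > 0"
    define d where "d = e / ((norm x)^2 + 1)"
    have d: "d > 0" using e by (simp add: d_def add_nonneg_pos)
    have "\<forall>\<^sub>F n in sequentially. \<forall>t\<in>{0..onorm P}. dist (poly (p n) t) (f t) < d"
      using d by (intro uniform_limitD[OF p])
    then have ev: "\<forall>\<^sub>F n in sequentially. - (d * (norm x)^2) \<le> Re (hinner (poly_op (p n) P x) x)"
    proof (rule eventually_mono)
      fix n assume n: "\<forall>t\<in>{0..onorm P}. dist (poly (p n) t) (f t) < d"
      have "\<forall>t\<in>{0..onorm P}. poly (p n + [:d:]) t > 0"
      proof
        fix t assume t: "t \<in> {0..onorm P}"
        show "poly (p n + [:d:]) t > 0"
          using n[rule_format, OF t] fpos[rule_format, OF t] by (simp add: dist_real_def abs_less_iff)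
      qed
      then have "posf (poly_op (p n + [:d:]) P)" by (rule poly_pos[OF P])
      then have "Re (hinner (poly_op (p n + [:d:]) P x) x) \<ge> 0" by (simp add: posf_def)
      then show "- (d * (norm x)^2) \<le> Re (hinner (poly_op (p n) P x) x)"
        by (simp add: poly_op_add[OF P_bl] poly_op_const hinner_add_left hinner_scaleR_left hinner_self)
    qed
    have "- (d * (norm x)^2) \<le> Re (hinner (?X x) x)"
      by (rule tendsto_le[OF sequentially_bot lim tendsto_const ev])
    moreover have "d * (norm x)^2 \<le> e"
    proof -
      have "d * (norm x)^2 = e * ((norm x)^2 / ((norm x)^2 + 1))" by (simp add: d_def)
      also have "\<dots> \<le> e * 1" using e by (intro mult_left_mono) (auto simp: divide_le_eq_1 add_nonneg_pos)
      finally show ?thesis by simp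
    qed
    ultimately show "0 \<le> Re (hinner (?X x) x) + e" by simp
  qed
qed

lemma fcalc_commute:
  assumes R: "bounded_linear R" and c: "\<And>x. R (P x) = P (R x)"
  shows "R (fcalc f P x) = fcalc f P (R x)"
proof -
  obtain p where p: "UL (onorm P) p f" using fcalc_seq by blast
  have "(\<lambda>n. R (poly_op (p n) P x)) \<longlonglongrightarrow> R (fcalc f P x)"
    by (rule bounded_linear.tendsto[OF R fcalc_pt[OF p]])
  moreover have "(\<lambda>n. R (poly_op (p n) P x)) \<longlonglongrightarrow> fcalc f P (R x)"
    unfolding poly_op_commute[OF P_bl R c] by (rule fcalc_pt[OF p])
  ultimately show ?thesis by (rule LIMSEQ_unique)
qed

end

lemma fcalc_id:
  assumes P: "cblinear P" "posf P"
  shows "fcalc (\<lambda>t. t) P x = P x"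
proof -
  have c: "continuous_on {0..onorm P} (\<lambda>t::real. t)" by (intro continuous_intros)
  have "UL (onorm P) (\<lambda>n. [:0,1:]) (\<lambda>t. t)"
    by (simp add: uniform_limit_iff)
  then have "(\<lambda>n. poly_op [:0,1:] P x) \<longlonglongrightarrow> fcalc (\<lambda>t. t) P x" by (rule fcalc_pt[OF P c])
  then have "(\<lambda>n. P x) \<longlonglongrightarrow> fcalc (\<lambda>t. t) P x" by (simp add: poly_op_X[OF P_bl[OF P c]])
  then show ?thesis by (simp add: LIMSEQ_const_iff)
qed

lemma od_comp_tendsto:
  assumes F: "\<And>n. bounded_linear (F n)" and X: "bounded_linear X"
    and lim: "(\<lambda>n. od (F n) X) \<longlonglongrightarrow> 0"
  shows "(\<lambda>n. F n (F n x)) \<longlonglongrightarrow> X (X x)"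
proof -
  have a: "(\<lambda>n. F n (X x) - X (X x)) \<longlonglongrightarrow> 0"
    using od_tendsto_point[OF F X lim, of "X x"] by (simp add: LIM_zero)
  have v: "(\<lambda>n. norm (F n x - X x)) \<longlonglongrightarrow> 0"
    using od_tendsto_point[OF F X lim, of x] by (simp add: tendsto_norm_zero_iff LIM_zero)
  have g: "(\<lambda>n. (od (F n) X + onorm X) * norm (F n x - X x)) \<longlonglongrightarrow> (0 + onorm X) * 0"
    by (intro tendsto_mult tendsto_add lim tendsto_const v)
  have b: "(\<lambda>n. F n (F n x - X x)) \<longlonglongrightarrow> 0"
  proof (rule Lim_null_comparison[OF _ g[simplified]])
    show "\<forall>\<^sub>F n in sequentially. norm (F n (F n x - X x)) \<le> (od (F n) X + onorm X) * norm (F n x - X x)"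
    proof (rule always_eventually, rule allI)
      fix n
      let ?v = "F n x - X x"
      have "norm (F n ?v) \<le> norm (F n ?v - X ?v) + norm (X ?v)"
        using norm_triangle_ineq[of "F n ?v - X ?v" "X ?v"] by simp
      also have "\<dots> \<le> od (F n) X * norm ?v + onorm X * norm ?v"
        by (intro add_mono od_point F X onorm X)
      finally show "norm (F n ?v) \<le> (od (F n) X + onorm X) * norm ?v" by (simp add: algebra_simps)
    qed
  qed
  have "(\<lambda>n. F n (F n x - X x) + (F n (X x) - X (X x))) \<longlonglongrightarrow> 0 + 0"
    by (intro tendsto_add a b)
  then have "(\<lambda>n. F n (F n x) - X (X x)) \<longlonglongrightarrow> 0"
    using F by (simp add: linear_simps)
  then show ?thesis by (simp add: LIM_zero_iff)
qed

lemma fcalc_sqrt_sq: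
  assumes P: "cblinear P" "posf P"
  shows "fcalc sqrt P (fcalc sqrt P x) = P x"
proof -
  have c: "continuous_on {0..onorm P} sqrt" by (intro continuous_intros)
  obtain p where p: "UL (onorm P) p sqrt" using fcalc_seq[OF P c] by blast
  have bl: "bounded_linear P" using P by (simp add: cblinear_def)
  have lim1: "(\<lambda>n. poly_op (p n) P (poly_op (p n) P x)) \<longlonglongrightarrow> fcalc sqrt P (fcalc sqrt P x)"
    by (rule od_comp_tendsto[OF poly_op_bl[OF bl] fcalc_bl[OF P c] fcalc_lim[OF P c p]])
  define K where "K = 2 * sqrt (onorm P) + 1"
  have "onorm P \<ge> 0" by (rule onorm_pos_le[OF bl])
  then have K: "K > 0" by (simp add: K_def add_nonneg_pos)
  have lim2: "(\<lambda>n. poly_op (p n) P (poly_op (p n) P x)) \<longlonglongrightarrow> P x"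
  proof (rule LIMSEQ_I)
    fix r :: real assume r: "r > 0"
    define e where "e = min 1 (r / (K * (norm x + 1)))"
    have e: "e > 0" "e \<le> 1" using r K by (auto simp: e_def add_nonneg_pos)
    have "\<forall>\<^sub>F n in sequentially. \<forall>t\<in>{0..onorm P}. dist (poly (p n) t) (sqrt t) < e"
      using e by (intro uniform_limitD[OF p])
    then obtain N where N: "\<And>n. n \<ge> N \<Longrightarrow> \<forall>t\<in>{0..onorm P}. dist (poly (p n) t) (sqrt t) < e"
      by (auto simp: eventually_sequentially)
    show "\<exists>no. \<forall>n\<ge>no. norm (poly_op (p n) P (poly_op (p n) P x) - P x) < r"
    proof (intro exI allI impI)
      fix n assume n: "n \<ge> N"
      have "\<forall>t\<in>{0..onorm P}. \<bar>poly (p n * p n - [:0,1:]) t\<bar> \<le> e * K"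
      proof
        fix t assume t: "t \<in> {0..onorm P}"
        have d: "\<bar>poly (p n) t - sqrt t\<bar> < e" using N[OF n] t by (simp add: dist_real_def)
        have st: "sqrt t \<le> sqrt (onorm P)" using t by auto
        have "poly (p n * p n - [:0,1:]) t = (poly (p n) t - sqrt t) * (poly (p n) t + sqrt t)"
          using t by (simp add: algebra_simps)
        also have "\<bar>\<dots>\<bar> = \<bar>poly (p n) t - sqrt t\<bar> * \<bar>poly (p n) t + sqrt t\<bar>" by (rule abs_mult)
        also have "\<dots> \<le> e * K"
        proof (rule mult_mono)
          show "\<bar>poly (p n) t - sqrt t\<bar> \<le> e" using d by simp
          show "\<bar>poly (p n) t + sqrt t\<bar> \<le> K"
          proof -
            have s0: "sqrt t \<ge> 0" using t by simp
            show ?thesis using d e st s0 unfolding K_def abs_le_iff abs_less_iff by linarith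
          qed
        qed (use e in auto)
        finally show "\<bar>poly (p n * p n - [:0,1:]) t\<bar> \<le> e * K" .
      qed
      then have "onorm (poly_op (p n * p n - [:0,1:]) P) \<le> e * K" by (rule poly_norm_bound[OF P])
      then have "norm (poly_op (p n * p n - [:0,1:]) P x) \<le> e * K * norm x"
        by (metis onorm[OF poly_op_bl[OF bl]] mult_right_mono norm_ge_zero order_trans)
      moreover have "poly_op (p n * p n - [:0,1:]) P x = poly_op (p n) P (poly_op (p n) P x) - P x"
        by (simp add: poly_op_diff[OF bl] poly_op_mult[OF bl] poly_op_X[OF bl])
      moreover have "e * K * norm x < r"
      proof -
        have "e * K * norm x \<le> (r / (K * (norm x + 1))) * K * norm x"
          using K by (intro mult_right_mono) (auto simp: e_def)
        also have "\<dots> = r * (norm x / (norm x + 1))"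
        proof -
          have "r / (K * (norm x + 1)) * K = r / (norm x + 1)" using K by simp
          then show ?thesis by simp
        qed
        also have "\<dots> < r * 1" using r by (intro mult_strict_left_mono) (auto simp: divide_less_eq_1 add_nonneg_pos)
        finally show ?thesis by simp
      qed
      ultimately show "norm (poly_op (p n) P (poly_op (p n) P x) - P x) < r" by simp
    qed
  qed
  show ?thesis using LIMSEQ_unique[OF lim1 lim2] .
qed



section \<open>Approximate eigenvectors\<close>

definition aev :: "('a::complex_hilbert \<Rightarrow> 'a) \<Rightarrow> real \<Rightarrow> (nat \<Rightarrow> 'a) \<Rightarrow> bool" where
  "aev S \<mu> x \<longleftrightarrow> (\<forall>n. norm (x n) = 1) \<and> (\<lambda>n. S (x n) - \<mu> *\<^sub>R x n) \<longlonglongrightarrow> 0"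

lemma exists_unit:
  assumes "\<exists>v::'a::complex_hilbert. v \<noteq> 0"
  shows "\<exists>w::'a. norm w = 1"
proof -
  obtain v :: 'a where "v \<noteq> 0" using assms by blast
  then show ?thesis by (intro exI[of _ "scaleR (1 / norm v) v"]) simp
qed

lemma near_norm_vector:
  fixes P :: "'a::complex_hilbert \<Rightarrow> 'a"
  assumes bl: "bounded_linear P" and nt: "\<exists>v::'a::complex_hilbert. v \<noteq> 0" and d: "d > 0"
  shows "\<exists>v::'a. norm v = 1 \<and> norm (P v) \<ge> onorm P - d"
proof (rule ccontr)
  assume "\<not> ?thesis"
  then have lt: "\<And>v. norm v = 1 \<Longrightarrow> norm (P v) < onorm P - d" by force
  obtain w :: 'a where w: "norm w = 1" using exists_unit[OF nt] by blast
  have pos: "onorm P - d > 0" using lt[OF w] by (metis norm_ge_zero order_le_less_trans)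
  have "onorm P \<le> onorm P - d"
  proof (rule onorm_bound)
    show "0 \<le> onorm P - d" using pos by simp
    fix v :: 'a
    show "norm (P v) \<le> (onorm P - d) * norm v"
    proof (cases "v = 0")
      case True then show ?thesis using bl by (simp add: linear_simps)
    next
      case False
      let ?u = "scaleR (1 / norm v) v"
      have "norm ?u = 1" using False by simp
      then have "norm (P ?u) < onorm P - d" by (rule lt)
      moreover have "P ?u = scaleR (1 / norm v) (P v)" using bl by (simp add: linear_simps)
      ultimately have "norm (P v) / norm v < onorm P - d" using False by simp
      then show ?thesis using False by (simp add: divide_less_eq less_imp_le)
    qed
  qed
  then show False using d by simp
qed

lemma aev_exists:
  fixes P :: "'a::complex_hilbert \<Rightarrow> 'a"
  assumes P: "cblinear P" "posf P" and nt: "\<exists>v::'a::complex_hilbert. v \<noteq> 0"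
  shows "\<exists>x. aev P (onorm P) x"
proof -
  have bl: "bounded_linear P" using P by (simp add: cblinear_def)
  define M where "M = onorm P"
  have M0: "M \<ge> 0" using onorm_pos_le[OF bl] by (simp add: M_def)
  have "\<forall>n. \<exists>v::'a. norm v = 1 \<and> norm (P v) \<ge> M - inverse (real (Suc n))"
    using near_norm_vector[OF bl nt] by (simp add: M_def)
  then obtain x where x: "\<And>n. norm (x n) = 1" "\<And>n. norm (P (x n)) \<ge> M - inverse (real (Suc n))"
    by metis
  have hP: "herm P" using herm_of_posf[OF P] .
  have bound: "norm (P (x n) - M *\<^sub>R x n) \<le> sqrt (2 * M * inverse (real (Suc n)))" for n
  proof -
    let ?v = "x n" and ?d = "inverse (real (Suc n))"
    have d0: "?d > 0" by simp
    have c: "hinner ?v (P ?v) = cnj (hinner (P ?v) ?v)" by (rule hinner_cnj)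
    have "(norm (P ?v - M *\<^sub>R ?v))^2 = Re (hinner (P ?v - M *\<^sub>R ?v) (P ?v - M *\<^sub>R ?v))"
      by (rule norm_sq_hinner)
    also have "\<dots> = (norm (P ?v))^2 - 2 * M * Re (hinner (P ?v) ?v) + M^2"
      unfolding hinner_diff_left hinner_diff_right hinner_scaleR_left hinner_scaleR_right
      using x(1)[of n] c by (simp add: hinner_self power2_eq_square algebra_simps)
    also have "\<dots> \<le> M^2 - (norm (P ?v))^2"
      using key_ineq[OF P, of ?v] M0 by (simp add: M_def)
    also have "\<dots> \<le> 2 * M * ?d"
    proof (cases "M - ?d \<ge> 0")
      case True
      then have "(M - ?d)^2 \<le> (norm (P ?v))^2" using x(2)[of n] by (intro power_mono) auto
      moreover have "(M - ?d)^2 = M^2 - 2 * M * ?d + ?d^2" by (simp add: power2_eq_square algebra_simps)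
      moreover have "?d^2 \<ge> 0" by simp
      ultimately show ?thesis by linarith
    next
      case False
      then have "M * M \<le> M * ?d" using M0 by (intro mult_left_mono) auto
      moreover have "M * ?d \<ge> 0" using M0 d0 by simp
      moreover have "(norm (P ?v))^2 \<ge> 0" by simp
      ultimately show ?thesis unfolding power2_eq_square by linarith
    qed
    finally show ?thesis by (simp add: real_le_rsqrt)
  qed
  have g: "(\<lambda>n. sqrt (2 * M * inverse (real (Suc n)))) \<longlonglongrightarrow> sqrt (2 * M * 0)"
    by (intro tendsto_real_sqrt tendsto_mult tendsto_const LIMSEQ_inverse_real_of_nat)
  have g2: "(\<lambda>n. sqrt (2 * M * inverse (real (Suc n)))) \<longlonglongrightarrow> 0" using g by simp
  have "(\<lambda>n. P (x n) - M *\<^sub>R x n) \<longlonglongrightarrow> 0"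
    by (rule Lim_null_comparison[OF _ g2]) (intro always_eventually allI bound)
  then show ?thesis using x(1) by (auto simp: aev_def M_def)
qed

lemma aev_poly:
  assumes bl: "bounded_linear P" and a: "aev P \<mu> x"
  shows "(\<lambda>n. poly_op p P (x n) - poly p \<mu> *\<^sub>R x n) \<longlonglongrightarrow> 0"
proof (induction p)
  case 0 then show ?case by simp
next
  case (pCons c p)
  have ev: "(\<lambda>n. P (x n) - \<mu> *\<^sub>R x n) \<longlonglongrightarrow> 0" using a by (simp add: aev_def)
  have t1: "(\<lambda>n. P (poly_op p P (x n) - poly p \<mu> *\<^sub>R x n)) \<longlonglongrightarrow> P 0"
    by (rule bounded_linear.tendsto[OF bl pCons.IH])
  have t2: "(\<lambda>n. poly p \<mu> *\<^sub>R (P (x n) - \<mu> *\<^sub>R x n)) \<longlonglongrightarrow> poly p \<mu> *\<^sub>R 0"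
    by (intro tendsto_scaleR tendsto_const ev)
  have "(\<lambda>n. P (poly_op p P (x n) - poly p \<mu> *\<^sub>R x n) + poly p \<mu> *\<^sub>R (P (x n) - \<mu> *\<^sub>R x n)) \<longlonglongrightarrow> P 0 + poly p \<mu> *\<^sub>R 0"
    by (intro tendsto_add t1 t2)
  moreover have "P (poly_op p P (x n) - poly p \<mu> *\<^sub>R x n) + poly p \<mu> *\<^sub>R (P (x n) - \<mu> *\<^sub>R x n)
      = poly_op (pCons c p) P (x n) - poly (pCons c p) \<mu> *\<^sub>R x n" for n
  proof -
    have e1: "P (poly_op p P (x n) - poly p \<mu> *\<^sub>R x n) = P (poly_op p P (x n)) - poly p \<mu> *\<^sub>R P (x n)"
      using bl by (simp add: linear_simps)
    show ?thesis unfolding e1 poly_op_pCons[OF bl] poly_pCons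
      by (simp add: scaleR_diff_right scaleR_add_left)
  qed
  ultimately show ?case using bl by (simp add: linear_simps(3))
qed

lemma aev_fcalc:
  assumes P: "cblinear P" "posf P" and f: "continuous_on {0..onorm P} f"
    and mu: "\<mu> \<in> {0..onorm P}" and a: "aev P \<mu> x"
  shows "aev (fcalc f P) (f \<mu>) x"
  unfolding aev_def
proof (intro conjI LIMSEQ_I)
  show "\<forall>n. norm (x n) = 1" using a by (simp add: aev_def)
  fix r :: real assume r: "r > 0"
  have bl: "bounded_linear P" using P by (simp add: cblinear_def)
  let ?X = "fcalc f P"
  obtain p where p: "UL (onorm P) p f" using fcalc_seq[OF P f] by blast
  have "\<forall>\<^sub>F n in sequentially. od (poly_op (p n) P) ?X < r / 3 \<and> (\<forall>t\<in>{0..onorm P}. dist (poly (p n) t) (f t) < r / 3)"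
  proof (rule eventually_conj)
    have "(\<lambda>n. od (poly_op (p n) P) ?X) \<longlonglongrightarrow> 0" by (rule fcalc_lim[OF P f p])
    then show "\<forall>\<^sub>F n in sequentially. od (poly_op (p n) P) ?X < r / 3"
      by (rule order_tendstoD(2)) (use r in auto)
    show "\<forall>\<^sub>F n in sequentially. \<forall>t\<in>{0..onorm P}. dist (poly (p n) t) (f t) < r / 3"
      using r by (intro uniform_limitD[OF p]) auto
  qed
  then obtain N where N: "od (poly_op (p N) P) ?X < r / 3" "\<forall>t\<in>{0..onorm P}. dist (poly (p N) t) (f t) < r / 3"
    by (auto simp: eventually_sequentially)
  have ap: "(\<lambda>n. poly_op (p N) P (x n) - poly (p N) \<mu> *\<^sub>R x n) \<longlonglongrightarrow> 0" by (rule aev_poly[OF bl a])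
  obtain N' where N': "\<And>n. n \<ge> N' \<Longrightarrow> norm (poly_op (p N) P (x n) - poly (p N) \<mu> *\<^sub>R x n) < r / 3"
    using LIMSEQ_D[OF ap, of "r / 3"] r by auto
  show "\<exists>no. \<forall>n\<ge>no. norm (?X (x n) - f \<mu> *\<^sub>R x n - 0) < r"
  proof (intro exI allI impI)
    fix n assume n: "n \<ge> N'"
    have nx: "norm (x n) = 1" using a by (simp add: aev_def)
    define a where "a = ?X (x n) - poly_op (p N) P (x n)"
    define b where "b = poly_op (p N) P (x n) - poly (p N) \<mu> *\<^sub>R x n"
    define c where "c = (poly (p N) \<mu> - f \<mu>) *\<^sub>R x n"
    have eq: "?X (x n) - f \<mu> *\<^sub>R x n = a + b + c"
      by (simp add: a_def b_def c_def algebra_simps)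
    have t1: "norm (a + b + c) \<le> norm (a + b) + norm c" by (rule norm_triangle_ineq)
    have t2: "norm (a + b) \<le> norm a + norm b" by (rule norm_triangle_ineq)
    have na: "norm a \<le> od (poly_op (p N) P) ?X"
      using od_point[OF poly_op_bl[OF bl] fcalc_bl[OF P f], of "p N" "x n"] nx
      by (simp add: norm_minus_commute a_def)
    have nb: "norm b < r / 3" using N'[OF n] by (simp add: b_def)
    have nc: "norm c < r / 3"
      using N(2) mu nx by (simp add: dist_real_def c_def)
    have "norm (a + b + c) < r" using t1 t2 na nb nc N(1) by linarith
    then show "norm (?X (x n) - f \<mu> *\<^sub>R x n - 0) < r" using eq by simp
  qed
qed

lemma aev_add:
  assumes "aev S \<mu> x" "aev T \<nu> x"
  shows "aev (\<lambda>v. S v + T v) (\<mu> + \<nu>) x"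
proof -
  have "(\<lambda>n. (S (x n) - \<mu> *\<^sub>R x n) + (T (x n) - \<nu> *\<^sub>R x n)) \<longlonglongrightarrow> 0 + 0"
    using assms by (intro tendsto_add) (auto simp: aev_def)
  then show ?thesis using assms by (simp add: aev_def algebra_simps scaleR_add_left)
qed

lemma aev_le:
  assumes bl: "bounded_linear S" and a: "aev S \<mu> x"
  shows "\<bar>\<mu>\<bar> \<le> onorm S"
proof (rule le_by_eps)
  fix e :: real assume e: "e > 0"
  have "(\<lambda>n. S (x n) - \<mu> *\<^sub>R x n) \<longlonglongrightarrow> 0" using a by (simp add: aev_def)
  then obtain N where N: "norm (S (x N) - \<mu> *\<^sub>R x N) < e" using e by (auto simp: LIMSEQ_iff)
  have nx: "norm (x N) = 1" using a by (simp add: aev_def)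
  have "\<bar>\<mu>\<bar> = norm (\<mu> *\<^sub>R x N)" using nx by simp
  also have "\<dots> \<le> norm (S (x N)) + norm (S (x N) - \<mu> *\<^sub>R x N)"
    using norm_triangle_ineq[of "S (x N)" "\<mu> *\<^sub>R x N - S (x N)"] by (simp add: norm_minus_commute)
  also have "\<dots> \<le> onorm S + e" using onorm[OF bl, of "x N"] nx N by simp
  finally show "\<bar>\<mu>\<bar> \<le> onorm S + e" .
qed



section \<open>Riesz representation\<close>

lemma parallelogram:
  fixes u v :: "'a::complex_hilbert"
  shows "(norm (u + v))^2 + (norm (u - v))^2 = 2 * (norm u)^2 + 2 * (norm v)^2"
proof -
  have "complex_of_real ((norm (u + v))^2 + (norm (u - v))^2) = hinner (u + v) (u + v) + hinner (u - v) (u - v)"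
    by (simp add: hinner_self)
  also have "\<dots> = 2 * hinner u u + 2 * hinner v v"
    by (simp add: hinner_add_left hinner_add_right hinner_diff_left hinner_diff_right)
  also have "\<dots> = complex_of_real (2 * (norm u)^2 + 2 * (norm v)^2)"
    by (simp add: hinner_self)
  finally show ?thesis using of_real_eq_iff by blast
qed

lemma riesz:
  fixes \<phi> :: "'a::complex_hilbert \<Rightarrow> complex"
  assumes add: "\<And>x y. \<phi> (x + y) = \<phi> x + \<phi> y"
    and sc: "\<And>c x. \<phi> (hscale c x) = c * \<phi> x"
    and bd: "\<And>x. cmod (\<phi> x) \<le> K * norm x"
  shows "\<exists>z. \<forall>x. \<phi> x = hinner x z"
proof (cases "\<forall>x. \<phi> x = 0")
  case True then show ?thesis by (intro exI[of _ 0]) simp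
next
  case False
  then obtain x0 where x0: "\<phi> x0 \<noteq> 0" by blast
  have phi0: "\<phi> 0 = 0" using add[of 0 0] by simp
  have phiminus: "\<phi> (- x) = - \<phi> x" for x using add[of x "-x"] phi0 by (simp add: eq_neg_iff_add_eq_0 add.commute)
  have phidiff: "\<phi> (x - y) = \<phi> x - \<phi> y" for x y using add[of x "-y"] phiminus[of y] by simp
  have phiR: "\<phi> (r *\<^sub>R x) = of_real r * \<phi> x" for r x using sc[of "of_real r" x] by (simp add: hscale_of_real)
  have cont: "(\<lambda>n. \<phi> (a n)) \<longlonglongrightarrow> \<phi> A" if "a \<longlonglongrightarrow> A" for a A
  proof -
    have "(\<lambda>n. norm (a n - A)) \<longlonglongrightarrow> 0" using that by (simp add: tendsto_norm_zero_iff LIM_zero_iff)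
    then have g: "(\<lambda>n. K * norm (a n - A)) \<longlonglongrightarrow> 0" using tendsto_mult_right_zero by blast
    have "(\<lambda>n. \<phi> (a n) - \<phi> A) \<longlonglongrightarrow> 0"
      by (rule Lim_null_comparison[OF _ g]) (intro always_eventually allI, simp add: bd flip: phidiff)
    then show ?thesis by (simp add: LIM_zero_iff)
  qed
  define N where "N = {x. \<phi> x = 0}"
  have N0: "0 \<in> N" using phi0 by (simp add: N_def)
  define D where "D = (\<lambda>n. norm (x0 - n)) ` N"
  define d where "d = Inf D"
  have Dne: "D \<noteq> {}" using N0 by (auto simp: D_def)
  have Dbdd: "bdd_below D" by (auto simp: D_def intro!: bdd_belowI[of _ 0])
  have dle: "d \<le> norm (x0 - n)" if "n \<in> N" for n
    unfolding d_def D_def using that Dbdd[unfolded D_def] by (intro cInf_lower) auto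
  have d0: "d \<ge> 0" unfolding d_def using Dne by (intro cInf_greatest) (auto simp: D_def)
  have approx: "\<exists>n\<in>N. (norm (x0 - n))^2 < d^2 + e" if e: "e > 0" for e
  proof -
    define e' where "e' = min 1 (e / (2 * d + 1))"
    have e': "e' > 0" "e' \<le> 1" "e' \<le> e / (2 * d + 1)" using e d0 by (auto simp: e'_def)
    have "Inf D < d + e'" using e' by (simp add: d_def)
    then obtain t where "t \<in> D" "t < d + e'" using cInf_lessD[OF Dne] by blast
    then obtain n where n: "n \<in> N" "norm (x0 - n) < d + e'" by (auto simp: D_def)
    have "norm (x0 - n) \<ge> 0" by simp
    then have "(norm (x0 - n))^2 < (d + e')^2" using n(2) by (intro power_strict_mono) auto
    also have "(d + e')^2 = d^2 + e' * (2 * d + e')" by (simp add: power2_eq_square algebra_simps)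
    also have "e' * (2 * d + e') \<le> e' * (2 * d + 1)" using e' by (intro mult_left_mono) auto
    also have "e' * (2 * d + 1) \<le> e" using e' d0 by (simp add: le_divide_eq add_nonneg_pos mult.commute)
    finally show ?thesis using n(1) by auto
  qed
  have "\<forall>k. \<exists>n\<in>N. (norm (x0 - n))^2 < d^2 + inverse (real (Suc k))"
    using approx by simp
  then obtain nk where nk: "\<And>k. nk k \<in> N" "\<And>k. (norm (x0 - nk k))^2 < d^2 + inverse (real (Suc k))"
    by metis
  have cauchy: "(norm (nk k - nk l))^2 \<le> 2 * inverse (real (Suc k)) + 2 * inverse (real (Suc l))" for k l
  proof -
    let ?u = "x0 - nk k" and ?v = "x0 - nk l"
    have "(norm (?u + ?v))^2 + (norm (?u - ?v))^2 = 2 * (norm ?u)^2 + 2 * (norm ?v)^2"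
      by (rule parallelogram)
    moreover have "?u - ?v = nk l - nk k" by simp
    moreover have "?u + ?v = 2 *\<^sub>R (x0 - (1/2) *\<^sub>R (nk k + nk l))" by (simp add: algebra_simps scaleR_2)
    moreover have "(1/2) *\<^sub>R (nk k + nk l) \<in> N" using nk(1)[of k] nk(1)[of l]
      by (simp add: N_def phiR add)
    then have "d \<le> norm (x0 - (1/2) *\<^sub>R (nk k + nk l))" by (rule dle)
    then have "4 * d^2 \<le> (norm (2 *\<^sub>R (x0 - (1/2) *\<^sub>R (nk k + nk l))))^2"
      using d0 by (simp add: power_mono power_mult_distrib)
    ultimately show ?thesis using nk(2)[of k] nk(2)[of l] by (simp add: norm_minus_commute)
  qed
  have "Cauchy nk"
  proof (rule metric_CauchyI)
    fix e :: real assume e: "e > 0"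
    obtain M :: nat where M: "inverse (real (Suc M)) < e^2 / 4"
      using e by (metis divide_pos_pos reals_Archimedean zero_less_numeral zero_less_power)
    show "\<exists>M. \<forall>m\<ge>M. \<forall>n\<ge>M. dist (nk m) (nk n) < e"
    proof (intro exI allI impI)
      fix m n assume m: "m \<ge> M" and n: "n \<ge> M"
      have im: "inverse (real (Suc m)) \<le> inverse (real (Suc M))" using m by (simp add: le_imp_inverse_le)
      have inn: "inverse (real (Suc n)) \<le> inverse (real (Suc M))" using n by (simp add: le_imp_inverse_le)
      have "(dist (nk m) (nk n))^2 < e^2"
        using cauchy[of m n] im inn M unfolding dist_norm by linarith
      then show "dist (nk m) (nk n) < e" using e by (simp add: power_less_imp_less_base)
    qed
  qed
  then obtain ns where ns: "nk \<longlonglongrightarrow> ns" using Cauchy_convergent_iff convergent_def by blast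
  have nsN: "ns \<in> N"
  proof -
    have "(\<lambda>k. \<phi> (nk k)) \<longlonglongrightarrow> \<phi> ns" by (rule cont[OF ns])
    moreover have "(\<lambda>k. \<phi> (nk k)) = (\<lambda>k. 0)" using nk(1) by (simp add: N_def)
    ultimately show ?thesis by (simp add: N_def LIMSEQ_const_iff)
  qed
  have nsmin: "(norm (x0 - ns))^2 \<le> d^2"
  proof -
    have l1: "(\<lambda>k. (norm (x0 - nk k))^2) \<longlonglongrightarrow> (norm (x0 - ns))^2"
      by (intro tendsto_intros ns)
    have l2: "(\<lambda>k. d^2 + inverse (real (Suc k))) \<longlonglongrightarrow> d^2 + 0"
      by (intro tendsto_intros LIMSEQ_inverse_real_of_nat)
    have "(norm (x0 - ns))^2 \<le> d^2 + 0"
      by (rule tendsto_le[OF sequentially_bot l2 l1]) (intro always_eventually allI less_imp_le nk(2))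
    then show ?thesis by simp
  qed
  define y where "y = x0 - ns"
  have phiy: "\<phi> y = \<phi> x0" using nsN by (simp add: y_def phidiff N_def)
  have ymin: "(norm y)^2 \<le> (norm (y - w))^2" if w: "w \<in> N" for w
  proof -
    have "ns + w \<in> N" using nsN w by (simp add: N_def add)
    then have "d \<le> norm (x0 - (ns + w))" by (rule dle)
    then have "d^2 \<le> (norm (y - w))^2" using d0 by (simp add: y_def power_mono algebra_simps)
    then show ?thesis using nsmin unfolding y_def by linarith
  qed
  have orth: "hinner w y = 0" if w: "w \<in> N" for w
  proof -
    define a where "a = hinner y w"
    define t where "t = 1 / ((norm w)^2 + 1)"
    have t: "t > 0" by (simp add: t_def add_nonneg_pos)
    have wN: "hscale (of_real t * a) w \<in> N" using w by (simp add: N_def sc)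
    have e1: "hinner y (hscale (of_real t * a) w) = of_real (t * (cmod a)^2)"
    proof -
      have ca: "cnj a * a = of_real ((cmod a)^2)" using mult_cnj_cmod[of a] by (simp add: mult.commute)
      show ?thesis by (simp add: hinner_scale_right a_def[symmetric] ca)
    qed
    have e2: "hinner (hscale (of_real t * a) w) y = of_real (t * (cmod a)^2)"
      using e1 by (metis hinner_cnj complex_cnj_complex_of_real)
    have e3: "hinner (hscale (of_real t * a) w) (hscale (of_real t * a) w) = of_real (t^2 * (cmod a)^2 * (norm w)^2)"
      using t by (simp add: hinner_self norm_hscale norm_mult power_mult_distrib abs_of_pos mult_ac)
    have "(norm (y - hscale (of_real t * a) w))^2 = (norm y)^2 - 2 * t * (cmod a)^2 + t^2 * (cmod a)^2 * (norm w)^2"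
    proof -
      have "complex_of_real ((norm (y - hscale (of_real t * a) w))^2) =
          hinner y y - hinner y (hscale (of_real t * a) w) - hinner (hscale (of_real t * a) w) y +
          hinner (hscale (of_real t * a) w) (hscale (of_real t * a) w)"
        unfolding hinner_self[symmetric] by (simp add: hinner_diff_left hinner_diff_right)
      also have "\<dots> = complex_of_real ((norm y)^2 - 2 * t * (cmod a)^2 + t^2 * (cmod a)^2 * (norm w)^2)"
        unfolding e1 e2 e3 by (simp add: hinner_self)
      finally show ?thesis using of_real_eq_iff by blast
    qed
    then have "2 * t * (cmod a)^2 \<le> t^2 * (cmod a)^2 * (norm w)^2" using ymin[OF wN] by simp
    then have "2 * (cmod a)^2 \<le> t * (cmod a)^2 * (norm w)^2" using t by (simp add: power2_eq_square)
    moreover have "t * (norm w)^2 \<le> 1" by (simp add: t_def divide_le_eq_1 add_nonneg_pos)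
    then have "t * (cmod a)^2 * (norm w)^2 \<le> (cmod a)^2"
      using mult_left_mono[of "t * (norm w)^2" 1 "(cmod a)^2"] by (simp add: algebra_simps)
    ultimately have "(cmod a)^2 \<le> 0" by linarith
    then have "a = 0" by simp
    then show ?thesis by (metis a_def hinner_cnj complex_cnj_zero)
  qed
  have y0: "y \<noteq> 0" using phiy x0 phi0 by auto
  have ny: "(norm y)^2 > 0" using y0 by simp
  define z where "z = hscale (cnj (\<phi> y) / of_real ((norm y)^2)) y"
  show ?thesis
  proof (intro exI allI)
    fix x
    define c where "c = \<phi> x / \<phi> y"
    have "x - hscale c y \<in> N" using x0 phiy by (simp add: N_def phidiff sc c_def)
    then have "hinner (x - hscale c y) y = 0" by (rule orth)
    then have hxy: "hinner x y = c * of_real ((norm y)^2)"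
      by (simp add: hinner_diff_left hinner_scale_left hinner_self)
    have "hinner x z = \<phi> y / of_real ((norm y)^2) * hinner x y"
      by (simp add: z_def hinner_scale_right)
    also have "\<dots> = \<phi> x" using hxy ny x0 phiy by (simp add: c_def field_simps)
    finally show "\<phi> x = hinner x z" by simp
  qed
qed



section \<open>Adjoint and absolute value\<close>

lemma adjoint_exists:
  assumes A: "cblinear A"
  shows "\<exists>B. \<forall>x y. hinner (A x) y = hinner x (B y)"
proof -
  have bl: "bounded_linear A" using A by (simp add: cblinear_def)
  have "\<exists>z. \<forall>x. hinner (A x) y = hinner x z" for y
  proof (rule riesz[where K = "onorm A * norm y"])
    fix x x' :: 'a and c
    show "hinner (A (x + x')) y = hinner (A x) y + hinner (A x') y"
      using bl by (simp add: linear_simps hinner_add_left)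
    show "hinner (A (hscale c x)) y = c * hinner (A x) y"
      using A by (simp add: cblinear_def hinner_scale_left)
    have "cmod (hinner (A x) y) \<le> norm (A x) * norm y" by (rule cauchy_schwarz)
    also have "\<dots> \<le> onorm A * norm x * norm y" by (intro mult_right_mono onorm[OF bl]) simp
    finally show "cmod (hinner (A x) y) \<le> onorm A * norm y * norm x" by (simp add: mult_ac)
  qed
  then show ?thesis by metis
qed

lemma adjoint_eq:
  assumes A: "cblinear A"
  shows "hinner (A x) y = hinner x (adjoint A y)"
proof -
  obtain B where B: "\<forall>x y. hinner (A x) y = hinner x (B y)" using adjoint_exists[OF A] by blast
  have u: "B' = B" if "\<forall>x y. hinner (A x) y = hinner x (B' y)" for B'
  proof
    fix y show "B' y = B y" using that B by (intro hinner_ext) auto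
  qed
  have "adjoint A = B" unfolding adjoint_def by (rule the_equality, rule B, rule u, assumption)
  then show ?thesis using B by simp
qed

lemma adjoint_cbl:
  assumes A: "cblinear A"
  shows "cblinear (adjoint A)"
proof -
  have bl: "bounded_linear A" using A by (simp add: cblinear_def)
  let ?B = "adjoint A"
  have addB: "?B (y + y') = ?B y + ?B y'" for y y'
    by (rule hinner_ext) (simp add: adjoint_eq[OF A, symmetric] hinner_add_right)
  have scB: "?B (hscale c y) = hscale c (?B y)" for c y
    by (rule hinner_ext) (simp add: adjoint_eq[OF A, symmetric] hinner_scale_right)
  have bdB: "norm (?B y) \<le> norm y * onorm A" for y
  proof -
    have "(norm (?B y))^2 = Re (hinner (?B y) (?B y))" by (rule norm_sq_hinner)
    also have "\<dots> = Re (hinner (A (?B y)) y)" by (simp add: adjoint_eq[OF A])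
    also have "\<dots> \<le> cmod (hinner (A (?B y)) y)" by (rule complex_Re_le_cmod)
    also have "\<dots> \<le> norm (A (?B y)) * norm y" by (rule cauchy_schwarz)
    also have "\<dots> \<le> onorm A * norm (?B y) * norm y" by (intro mult_right_mono onorm[OF bl]) simp
    finally have "norm (?B y) * norm (?B y) \<le> norm (?B y) * (norm y * onorm A)"
      by (simp add: power2_eq_square mult_ac)
    then show ?thesis
      by (cases "norm (?B y) = 0") (auto simp: onorm_pos_le[OF bl])
  qed
  have "bounded_linear ?B"
    by (rule bounded_linear_intro[OF addB _ bdB]) (simp add: scB flip: hscale_of_real)
  then show ?thesis using scB by (simp add: cblinear_def)
qed

lemma AstarA_pos:
  assumes A: "cblinear A"
  shows "cblinear (\<lambda>x. adjoint A (A x))" "posf (\<lambda>x. adjoint A (A x))"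
proof -
  have B: "cblinear (adjoint A)" by (rule adjoint_cbl[OF A])
  show "cblinear (\<lambda>x. adjoint A (A x))"
    using A B unfolding cblinear_def by (auto intro: bounded_linear_compose)
  show "posf (\<lambda>x. adjoint A (A x))"
    unfolding posf_def
  proof
    fix x
    have "hinner (adjoint A (A x)) x = cnj (hinner (A x) (A x))"
      by (metis adjoint_eq[OF A] hinner_cnj)
    then show "Im (hinner (adjoint A (A x)) x) = 0 \<and> 0 \<le> Re (hinner (adjoint A (A x)) x)"
      by (simp add: hinner_self)
  qed
qed

lemma sqrt_unique:
  assumes Q: "cblinear Q" "posf Q"
    and S: "cblinear S" "posf S" and SS: "\<And>x. S (S x) = Q x"
  shows "S = fcalc sqrt Q"
proof
  fix x
  have c: "continuous_on {0..onorm Q} sqrt" by (intro continuous_intros)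
  let ?R = "fcalc sqrt Q"
  have Rc: "cblinear ?R" by (rule fcalc_cbl[OF Q c])
  have Rp: "posf ?R" by (rule fcalc_posf[OF Q c]) auto
  have RR: "?R (?R v) = Q v" for v by (rule fcalc_sqrt_sq[OF Q])
  have Sbl: "bounded_linear S" and Rbl: "bounded_linear ?R" using S Rc by (auto simp: cblinear_def)
  have hR: "herm ?R" using herm_of_posf[OF Rc Rp] .
  have hS: "herm S" using herm_of_posf[OF S] .
  have SQ: "S (Q v) = Q (S v)" for v using SS by metis
  have SR: "S (?R v) = ?R (S v)" for v by (rule fcalc_commute[OF Q c Sbl SQ])
  define D where "D v = ?R v - S v" for v
  have hD: "hinner (D u) v = hinner u (D v)" for u v
    using hR hS by (simp add: D_def herm_def hinner_diff_left hinner_diff_right)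
  have Dlin: "D (u + v) = D u + D v" for u v using Sbl Rbl by (simp add: D_def linear_simps)
  have zero: "D (?R w) + D (S w) = 0" for w
    using Sbl Rbl by (simp add: D_def RR SS SR linear_simps algebra_simps)
  define w where "w = D x"
  have "hinner (D (?R w)) x + hinner (D (S w)) x = 0"
    using zero[of w] by (simp add: hinner_add_left[symmetric])
  then have "hinner (?R w) w + hinner (S w) w = 0" by (simp add: hD w_def)
  moreover have "Re (hinner (?R w) w) \<ge> 0" "Re (hinner (S w) w) \<ge> 0"
    using Rp S(2) by (auto simp: posf_def)
  ultimately have "Re (hinner (?R w) w) = 0" "Re (hinner (S w) w) = 0"
    by (metis add_nonneg_eq_0_iff plus_complex.sel(1) zero_complex.sel(1))+
  then have "?R w = 0" "S w = 0" using posf_kernel[OF Rc Rp] posf_kernel[OF S] by auto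
  then have "D w = 0" by (simp add: D_def)
  then have "hinner w w = 0" using hD[of x w] by (simp add: w_def)
  then have "w = 0" using hinner_self_eq_0 by blast
  then show "S x = ?R x" by (simp add: w_def D_def)
qed

lemma abs_op_eq:
  assumes A: "cblinear A"
  shows "abs_op A = fcalc sqrt (\<lambda>x. adjoint A (A x))"
proof -
  let ?Q = "\<lambda>x. adjoint A (A x)"
  have Q: "cblinear ?Q" "posf ?Q" by (rule AstarA_pos[OF A])+
  have c: "continuous_on {0..onorm ?Q} sqrt" by (intro continuous_intros)
  let ?R = "fcalc sqrt ?Q"
  have "positive_op ?R" unfolding positive_op_iff
    using fcalc_cbl[OF Q c] fcalc_posf[OF Q c] by auto
  moreover have "?R \<circ> ?R = adjoint A \<circ> A" using fcalc_sqrt_sq[OF Q] by (simp add: fun_eq_iff)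
  ultimately have ex: "positive_op ?R \<and> ?R \<circ> ?R = adjoint A \<circ> A" ..
  have u: "S = ?R" if "positive_op S \<and> S \<circ> S = adjoint A \<circ> A" for S
    using that by (intro sqrt_unique[OF Q]) (auto simp: positive_op_iff fun_eq_iff)
  show ?thesis unfolding abs_op_def by (rule the_equality, rule ex, rule u, assumption)
qed

lemma abs_op_props:
  assumes A: "cblinear A"
  shows "cblinear (abs_op A)" "posf (abs_op A)" "onorm (abs_op A) = onorm A"
proof -
  let ?Q = "\<lambda>x. adjoint A (A x)"
  have Q: "cblinear ?Q" "posf ?Q" by (rule AstarA_pos[OF A])+
  have c: "continuous_on {0..onorm ?Q} sqrt" by (intro continuous_intros)
  show cb: "cblinear (abs_op A)" unfolding abs_op_eq[OF A] by (rule fcalc_cbl[OF Q c])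
  show ps: "posf (abs_op A)" unfolding abs_op_eq[OF A] by (rule fcalc_posf[OF Q c]) auto
  have hR: "herm (abs_op A)" using herm_of_posf[OF cb ps] .
  have "norm (abs_op A x) = norm (A x)" for x
  proof -
    have "(norm (abs_op A x))^2 = Re (hinner (abs_op A x) (abs_op A x))" by (rule norm_sq_hinner)
    also have "\<dots> = Re (hinner (abs_op A (abs_op A x)) x)" using hR by (simp add: herm_def)
    also have "abs_op A (abs_op A x) = ?Q x" unfolding abs_op_eq[OF A] by (rule fcalc_sqrt_sq[OF Q])
    also have "Re (hinner (?Q x) x) = Re (hinner x (?Q x))" by (metis complex_cnj_cancel_iff hinner_cnj cnj.simps(1))
    also have "\<dots> = Re (hinner (A x) (A x))" by (simp add: adjoint_eq[OF A])
    also have "\<dots> = (norm (A x))^2" by (simp add: norm_sq_hinner)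
    finally show ?thesis by simp
  qed
  then show "onorm (abs_op A) = onorm A" by (simp add: onorm_def)
qed



lemma convex_onD2:
  fixes h :: "real \<Rightarrow> real"
  assumes "convex_on S h" "x \<in> S" "y \<in> S" "u \<ge> 0" "v \<ge> 0" "u + v = 1"
  shows "h (u *\<^sub>R x + v *\<^sub>R y) \<le> u * h x + v * h y"
  using assms unfolding convex_on_def by blast

lemma convex_mono_cont:
  fixes h :: "real \<Rightarrow> real"
  assumes h_mono: "mono_on {0..} h" and h_convex: "convex_on {0..} h"
  shows "continuous_on {0..} h"
proof -
  have co: "continuous_on {0<..} h"
    by (rule convex_on_continuous[OF open_greaterThan convex_on_subset[OF h_convex]]) auto
  show ?thesis
    unfolding continuous_on_eq_continuous_within
  proof
    fix x :: real assume x: "x \<in> {0..}"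
    show "continuous (at x within {0..}) h"
    proof (cases "x = 0")
      case False
      then have "x \<in> {0<..}" using x by auto
      then have "isCont h x" using co by (simp add: continuous_on_eq_continuous_at)
      then show ?thesis by (rule continuous_at_imp_continuous_within)
    next
      case True
      have bnd: "\<bar>h t - h 0\<bar> \<le> t * \<bar>h 1 - h 0\<bar>" if t: "0 \<le> t" "t \<le> 1" for t
      proof -
        have "h 0 \<le> h t" using t by (intro monotone_onD[OF h_mono]) auto
        moreover have "h (t *\<^sub>R 1 + (1 - t) *\<^sub>R 0) \<le> t * h 1 + (1 - t) * h 0"
          using t by (intro convex_onD2[OF h_convex]) auto
        moreover have "h 0 \<le> h 1" by (intro monotone_onD[OF h_mono]) auto
        ultimately have "\<bar>h t - h 0\<bar> = h t - h 0" "\<bar>h 1 - h 0\<bar> = h 1 - h 0"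
          and "h t \<le> t * h 1 + (1 - t) * h 0" by auto
        then show ?thesis by (simp add: algebra_simps)
      qed
      show ?thesis unfolding True continuous_within_eps_delta
      proof (intro allI impI)
        fix e :: real assume e: "e > 0"
        define d where "d = min 1 (e / (\<bar>h 1 - h 0\<bar> + 1))"
        have K: "\<bar>h 1 - h 0\<bar> + 1 > 0" by (simp add: add_nonneg_pos)
        have d12: "d > 0" "d \<le> 1" "d \<le> e / (\<bar>h 1 - h 0\<bar> + 1)" using e K by (auto simp: d_def)
        have "d * (\<bar>h 1 - h 0\<bar> + 1) \<le> e / (\<bar>h 1 - h 0\<bar> + 1) * (\<bar>h 1 - h 0\<bar> + 1)"
          using d12 K by (intro mult_right_mono) auto
        also have "\<dots> = e" using K by simp
        finally have d: "d > 0" "d \<le> 1" "d * (\<bar>h 1 - h 0\<bar> + 1) \<le> e" using d12 by auto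
        show "\<exists>d>0. \<forall>x'\<in>{0..}. dist x' 0 < d \<longrightarrow> dist (h x') (h 0) < e"
        proof (intro exI[of _ d] conjI ballI impI d(1))
          fix t :: real assume t: "t \<in> {0..}" "dist t 0 < d"
          then have t': "0 \<le> t" "t < d" by (auto simp: dist_real_def)
          have "\<bar>h t - h 0\<bar> \<le> t * \<bar>h 1 - h 0\<bar>" using t' d by (intro bnd) auto
          also have "\<dots> \<le> d * \<bar>h 1 - h 0\<bar>" using t' by (intro mult_right_mono) auto
          also have "\<dots> < d * (\<bar>h 1 - h 0\<bar> + 1)" using d by simp
          also have "\<dots> \<le> e" by (rule d(3))
          finally show "dist (h t) (h 0) < e" by (simp add: dist_real_def)
        qed
      qed
    qed
  qed
qed

lemma main_bound:
  fixes X :: "'a::complex_hilbert \<Rightarrow> 'a"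
    and f g h :: "real \<Rightarrow> real"
  assumes nontriv: "\<exists>x::'a. x \<noteq> 0"
    and X: "cblinear X"
    and f_cont: "continuous_on {0..} f" and g_cont: "continuous_on {0..} g"
    and fg: "\<forall>t\<ge>0. f t * g t = t"
    and h_mono: "mono_on {0..} h"
    and h_convex: "convex_on {0..} h"
  shows "2 * h (onorm X) \<le> onorm (\<lambda>x. fcalc h (fcalc (\<lambda>t. (f t)^2) (abs_op X)) x
                  + fcalc h (fcalc (\<lambda>t. (g t)^2) (abs_op X)) x)"
proof -
  let ?P = "abs_op X"
  have P: "cblinear ?P" "posf ?P" using abs_op_props[OF X] by auto
  have nP: "onorm ?P = onorm X" using abs_op_props[OF X] by auto
  define M where "M = onorm ?P"
  have M0: "M \<ge> 0" using onorm_pos_le[OF cbl_bl[OF P(1)]] by (simp add: M_def)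
  obtain x where x: "aev ?P M x" using aev_exists[OF P nontriv] by (auto simp: M_def)
  have hc: "continuous_on {0..} h" by (rule convex_mono_cont[OF h_mono h_convex])
  have step: "aev (fcalc h (fcalc (\<lambda>t. (k t)^2) ?P)) (h ((k M)^2)) x"
    if kc: "continuous_on {0..} k" for k
  proof -
    have kc': "continuous_on {0..onorm ?P} (\<lambda>t. (k t)^2)"
      by (intro continuous_intros continuous_on_subset[OF kc]) auto
    let ?Q = "fcalc (\<lambda>t. (k t)^2) ?P"
    have Qc: "cblinear ?Q" by (rule fcalc_cbl[OF P kc'])
    have Qp: "posf ?Q" by (rule fcalc_posf[OF P kc']) auto
    have a1: "aev ?Q ((k M)^2) x"
      using aev_fcalc[OF P kc', of M x] x M0 by (simp add: M_def)
    have "\<bar>(k M)^2\<bar> \<le> onorm ?Q" by (rule aev_le[OF cbl_bl[OF Qc] a1])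
    then have kM: "(k M)^2 \<in> {0..onorm ?Q}" by simp
    have hc': "continuous_on {0..onorm ?Q} h" by (rule continuous_on_subset[OF hc]) auto
    show ?thesis by (rule aev_fcalc[OF Qc Qp hc' kM a1])
  qed
  have sum: "aev (\<lambda>v. fcalc h (fcalc (\<lambda>t. (f t)^2) ?P) v + fcalc h (fcalc (\<lambda>t. (g t)^2) ?P) v)
      (h ((f M)^2) + h ((g M)^2)) x"
    by (rule aev_add[OF step[OF f_cont] step[OF g_cont]])
  have fc: "continuous_on {0..onorm ?P} (\<lambda>t. (f t)^2)" "continuous_on {0..onorm ?P} (\<lambda>t. (g t)^2)"
    by (intro continuous_intros continuous_on_subset[OF f_cont] continuous_on_subset[OF g_cont]; auto)+
  have blsum: "bounded_linear (\<lambda>v. fcalc h (fcalc (\<lambda>t. (f t)^2) ?P) v + fcalc h (fcalc (\<lambda>t. (g t)^2) ?P) v)"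
  proof (intro bounded_linear_add)
    show "bounded_linear (fcalc h (fcalc (\<lambda>t. (f t)^2) ?P))"
      by (intro fcalc_bl fcalc_cbl[OF P fc(1)] fcalc_posf[OF P fc(1)] continuous_on_subset[OF hc]) auto
    show "bounded_linear (fcalc h (fcalc (\<lambda>t. (g t)^2) ?P))"
      by (intro fcalc_bl fcalc_cbl[OF P fc(2)] fcalc_posf[OF P fc(2)] continuous_on_subset[OF hc]) auto
  qed
  have le: "\<bar>h ((f M)^2) + h ((g M)^2)\<bar> \<le> onorm (\<lambda>v. fcalc h (fcalc (\<lambda>t. (f t)^2) ?P) v + fcalc h (fcalc (\<lambda>t. (g t)^2) ?P) v)"
    by (rule aev_le[OF blsum sum])
  have conv: "h ((1/2) *\<^sub>R (f M)^2 + (1/2) *\<^sub>R (g M)^2) \<le> (1/2) * h ((f M)^2) + (1/2) * h ((g M)^2)"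
    by (intro convex_onD2[OF h_convex]) auto
  have "M \<le> (1/2) * (f M)^2 + (1/2) * (g M)^2"
  proof -
    have "0 \<le> (f M - g M)^2" by simp
    then show ?thesis using fg M0 by (simp add: power2_eq_square algebra_simps)
  qed
  then have "h M \<le> h ((1/2) * (f M)^2 + (1/2) * (g M)^2)"
    using M0 by (intro monotone_onD[OF h_mono]) auto
  then have "2 * h M \<le> h ((f M)^2) + h ((g M)^2)" using conv by simp
  then show ?thesis using le nP M_def by simp
qed

lemma numrad_bound:
  fixes A D :: "'a::complex_hilbert \<Rightarrow> 'a"
  assumes nontriv: "\<exists>x::'a. x \<noteq> 0" and A: "cblinear A" and D: "cblinear D"
  shows "0 \<le> numrad (\<lambda>(x, y). (A x, D y))" "numrad (\<lambda>(x, y). (A x, D y)) \<le> max (onorm A) (onorm D)"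
proof -
  let ?T = "\<lambda>(x, y). (A x, D y)"
  have bA: "bounded_linear A" and bD: "bounded_linear D" using A D by (auto simp: cblinear_def)
  have bnd: "cmod (hinner (?T z) z) \<le> max (onorm A) (onorm D)" if z: "norm z = 1" for z :: "'a \<times> 'a"
  proof (cases z)
    case (Pair x y)
    have nz: "(norm x)^2 + (norm y)^2 = 1" using z Pair by (simp add: norm_Pair)
    have "hinner (?T z) z = hinner (A x) x + hinner (D y) y" by (simp add: Pair hinner_prod_def)
    then have "cmod (hinner (?T z) z) \<le> cmod (hinner (A x) x) + cmod (hinner (D y) y)"
      by (simp add: norm_triangle_ineq)
    also have "\<dots> \<le> onorm A * (norm x)^2 + onorm D * (norm y)^2"
      by (intro add_mono hinner_op_bound bA bD)
    also have "\<dots> \<le> max (onorm A) (onorm D) * (norm x)^2 + max (onorm A) (onorm D) * (norm y)^2"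
      by (intro add_mono mult_right_mono) auto
    also have "\<dots> = max (onorm A) (onorm D)" using nz by (simp add: algebra_simps flip: distrib_left)
    finally show ?thesis .
  qed
  obtain w :: 'a where w: "norm w = 1" using exists_unit[OF nontriv] by blast
  have ne: "{z :: 'a \<times> 'a. norm z = 1} \<noteq> {}" using w by (intro ex_in_conv[THEN iffD1] exI[of _ "(w, 0)"]) (simp add: norm_Pair)
  have bdd: "bdd_above ((\<lambda>z. cmod (hinner (?T z) z)) ` {z. norm z = 1})"
    using bnd by (intro bdd_aboveI[of _ "max (onorm A) (onorm D)"]) auto
  show "numrad ?T \<le> max (onorm A) (onorm D)"
    unfolding numrad_def using ne bnd by (intro cSUP_least) auto
  obtain z0 :: "'a \<times> 'a" where z0: "norm z0 = 1" using ne by blast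
  have "cmod (hinner (?T z0) z0) \<le> numrad ?T"
    unfolding numrad_def using z0 bdd by (intro cSUP_upper) auto
  then show "0 \<le> numrad ?T" by (rule order_trans[OF norm_ge_zero])
qed

theorem theorem3p1:
  fixes A D :: "'a::complex_hilbert \<Rightarrow> 'a"
    and f g h :: "real \<Rightarrow> real"
  assumes nontriv: "\<exists>x::'a. x \<noteq> 0"
    and A: "cblinear A" and D: "cblinear D"
    and f_cont: "continuous_on {0..} f" and g_cont: "continuous_on {0..} g"
    and f_nonneg: "\<forall>t\<ge>0. f t \<ge> 0" and g_nonneg: "\<forall>t\<ge>0. g t \<ge> 0"
    and fg: "\<forall>t\<ge>0. f t * g t = t"
    and h_nonneg: "\<forall>t\<ge>0. h t \<ge> 0"
    and h_mono: "mono_on {0..} h"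
    and h_convex: "convex_on {0..} h"
  shows "h (numrad (\<lambda>(x, y). (A x, D y)))
    \<le> 1/2 * max
        (onorm (\<lambda>x. fcalc h (fcalc (\<lambda>t. (f t)^2) (abs_op A)) x
                  + fcalc h (fcalc (\<lambda>t. (g t)^2) (abs_op A)) x))
        (onorm (\<lambda>x. fcalc h (fcalc (\<lambda>t. (f t)^2) (abs_op D)) x
                  + fcalc h (fcalc (\<lambda>t. (g t)^2) (abs_op D)) x))"
proof -
  have bA: "2 * h (onorm A) \<le> onorm (\<lambda>x. fcalc h (fcalc (\<lambda>t. (f t)^2) (abs_op A)) x
                  + fcalc h (fcalc (\<lambda>t. (g t)^2) (abs_op A)) x)"
    by (rule main_bound[OF nontriv A f_cont g_cont fg h_mono h_convex])
  have bD: "2 * h (onorm D) \<le> onorm (\<lambda>x. fcalc h (fcalc (\<lambda>t. (f t)^2) (abs_op D)) x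
                  + fcalc h (fcalc (\<lambda>t. (g t)^2) (abs_op D)) x)"
    by (rule main_bound[OF nontriv D f_cont g_cont fg h_mono h_convex])
  have n: "0 \<le> numrad (\<lambda>(x, y). (A x, D y))" "numrad (\<lambda>(x, y). (A x, D y)) \<le> max (onorm A) (onorm D)"
    by (rule numrad_bound[OF nontriv A D])+
  have oA: "onorm A \<ge> 0" and oD: "onorm D \<ge> 0"
    using A D by (auto intro: onorm_pos_le simp: cblinear_def)
  have "h (numrad (\<lambda>(x, y). (A x, D y))) \<le> h (max (onorm A) (onorm D))"
    using n oA oD by (intro monotone_onD[OF h_mono]) auto
  also have "\<dots> = max (h (onorm A)) (h (onorm D))"
  proof -
    have m1: "onorm A \<le> onorm D \<Longrightarrow> h (onorm A) \<le> h (onorm D)"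
      using oA oD by (intro monotone_onD[OF h_mono]) auto
    have m2: "onorm D \<le> onorm A \<Longrightarrow> h (onorm D) \<le> h (onorm A)"
      using oA oD by (intro monotone_onD[OF h_mono]) auto
    show ?thesis using m1 m2 by (cases "onorm A \<le> onorm D") (auto simp: max_def)
  qed
  also have "\<dots> \<le> 1/2 * max
        (onorm (\<lambda>x. fcalc h (fcalc (\<lambda>t. (f t)^2) (abs_op A)) x
                  + fcalc h (fcalc (\<lambda>t. (g t)^2) (abs_op A)) x))
        (onorm (\<lambda>x. fcalc h (fcalc (\<lambda>t. (f t)^2) (abs_op D)) x
                  + fcalc h (fcalc (\<lambda>t. (g t)^2) (abs_op D)) x))"
    using bA bD by (simp add: max_def)
  finally show ?thesis .
qed


end
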